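(* Given an operator system $\mathcal V \subset B(H)$ and a projection $p \in \mathcal V$, with $q = I-p$, then $(M_2(\mathcal V) / J_{p\oplus q}, \{\widetilde{C}(p_n \oplus q_n)\}_n, (p\oplus q) + J_{p \oplus q})$ is an operator system.
   Context: For $n \in \mathbb N$ let $p_n = I_n \otimes p$, $q_n = I_n \otimes q$, and define $C(p_n \oplus q_n) = \{ x \in M_{2n}(\mathcal V) : x = x^*, \ (p_n \oplus q_n)x(p_n \oplus q_n) \in B(H^{2n})^+\}$, where $M_n(M_2(\mathcal V))$ is identified with $M_2(M_n(\mathcal V)) = M_{2n}(\mathcal V)$ via the canonical shuffle. Let $J_{p \oplus q} = \operatorname{span}\big(C(p\oplus q) \cap -C(p\oplus q)\big) \subseteq M_2(\mathcal V)$, and let $\widetilde{C}(p_n \oplus q_n) = \{ (x_{ij} + J_{p\oplus q}) \in M_n(M_2(\mathcal V)/J_{p\oplus q}) : (x_{ij}) \in C(p_n\oplus q_n)\}$. *)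

theory Defs
  imports "HOL-Analysis.Analysis"
begin

class complex_inner_space = ab_group_add +
  fixes cscale :: "complex \<Rightarrow> 'a \<Rightarrow> 'a"
    and cinner :: "'a \<Rightarrow> 'a \<Rightarrow> complex"
  assumes cscale_add_right: "cscale a (x + y) = cscale a x + cscale a y"
    and cscale_add_left: "cscale (a + b) x = cscale a x + cscale b x"
    and cscale_cscale: "cscale a (cscale b x) = cscale (a * b) x"
    and cscale_one: "cscale 1 x = x"
    and cinner_add_left: "cinner (x + y) z = cinner x z + cinner y z"
    and cinner_cscale_left: "cinner (cscale a x) y = a * cinner x y"
    and cinner_commute: "cinner y x = cnj (cinner x y)"
    and cinner_self_nonneg: "Im (cinner x x) = 0 \<and> Re (cinner x x) \<ge> 0"
    and cinner_self_eq_zero: "cinner x x = 0 \<Longrightarrow> x = 0"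

definition cnorm :: "'a::complex_inner_space \<Rightarrow> real" where
  "cnorm x = sqrt (Re (cinner x x))"

class chilbert = complex_inner_space +
  assumes chilbert_complete:
    "(\<forall>e>0. \<exists>N::nat. \<forall>m\<ge>N. \<forall>n\<ge>N. sqrt (Re (cinner (X m - X n) (X m - X n))) < e) \<Longrightarrow>
       (\<exists>L. \<forall>e>0. \<exists>N::nat. \<forall>n\<ge>N. sqrt (Re (cinner (X n - L) (X n - L))) < e)"

type_synonym 'h op = "'h \<Rightarrow> 'h"

definition bop :: "('h::chilbert) op set" where
  "bop = {T. (\<forall>x y. T (x + y) = T x + T y) \<and> (\<forall>c x. T (cscale c x) = cscale c (T x))
            \<and> (\<exists>K. \<forall>x. cnorm (T x) \<le> K * cnorm x)}"

definition adj :: "('h::chilbert) op \<Rightarrow> 'h op" where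
  "adj T = (THE S. \<forall>x y. cinner (T x) y = cinner x (S y))"

definition zop :: "('h::chilbert) op" where "zop = (\<lambda>_. 0)"
definition opadd :: "('h::chilbert) op \<Rightarrow> 'h op \<Rightarrow> 'h op" where "opadd S T = (\<lambda>x. S x + T x)"
definition opscale :: "complex \<Rightarrow> ('h::chilbert) op \<Rightarrow> 'h op" where "opscale c T = (\<lambda>x. cscale c (T x))"

definition concrete_opsys :: "('h::chilbert) op set \<Rightarrow> bool" where
  "concrete_opsys V \<longleftrightarrow> V \<subseteq> bop \<and> id \<in> V \<and> (\<forall>S\<in>V. \<forall>T\<in>V. opadd S T \<in> V)
     \<and> (\<forall>c. \<forall>T\<in>V. opscale c T \<in> V) \<and> (\<forall>T\<in>V. adj T \<in> V)"

definition is_projection :: "('h::chilbert) op \<Rightarrow> bool" where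
  "is_projection p \<longleftrightarrow> adj p = p \<and> p \<circ> p = p"

section \<open>Matrices of operators (indices below n; zero outside)\<close>

type_synonym 'h opmat = "nat \<Rightarrow> nat \<Rightarrow> 'h op"

definition opmats :: "nat \<Rightarrow> ('h::chilbert) op set \<Rightarrow> 'h opmat set" where
  "opmats n V = {X. \<forall>i j. (i < n \<and> j < n \<longrightarrow> X i j \<in> V) \<and> (\<not> (i < n \<and> j < n) \<longrightarrow> X i j = zop)}"

definition opmat_star :: "nat \<Rightarrow> ('h::chilbert) opmat \<Rightarrow> 'h opmat" where
  "opmat_star n X = (\<lambda>i j. if i < n \<and> j < n then adj (X j i) else zop)"

definition opmat_mult :: "nat \<Rightarrow> ('h::chilbert) opmat \<Rightarrow> 'h opmat \<Rightarrow> 'h opmat" where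
  "opmat_mult n A B = (\<lambda>i k. if i < n \<and> k < n then (\<lambda>x. \<Sum>j<n. A i j (B j k x)) else zop)"

definition opmat_add :: "nat \<Rightarrow> ('h::chilbert) opmat \<Rightarrow> 'h opmat \<Rightarrow> 'h opmat" where
  "opmat_add n A B = (\<lambda>i j. if i < n \<and> j < n then opadd (A i j) (B i j) else zop)"

definition opmat_scale :: "nat \<Rightarrow> complex \<Rightarrow> ('h::chilbert) opmat \<Rightarrow> 'h opmat" where
  "opmat_scale n c A = (\<lambda>i j. if i < n \<and> j < n then opscale c (A i j) else zop)"

text \<open>Positivity in B(H^N): the operator X on H^N satisfies \<langle>X\<xi>,\<xi>\<rangle> \<ge> 0 for all \<xi>.\<close>
definition opmat_pos :: "nat \<Rightarrow> ('h::chilbert) opmat \<Rightarrow> bool" where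
  "opmat_pos N X \<longleftrightarrow> (\<forall>\<xi>::nat \<Rightarrow> 'h.
     let s = (\<Sum>i<N. cinner (\<Sum>j<N. X i j (\<xi> j)) (\<xi> i)) in Im s = 0 \<and> Re s \<ge> 0)"

text \<open>p_n \<oplus> q_n \<in> M_2(M_n(V)) = M_{2n}(V): diagonal with p in the first n, q = I - p in the last n slots.\<close>
definition pq_diag :: "nat \<Rightarrow> ('h::chilbert) op \<Rightarrow> 'h opmat" where
  "pq_diag n p = (\<lambda>i j. if i < 2*n \<and> j < 2*n \<and> i = j
       then (if i < n then p else (\<lambda>x. x - p x)) else zop)"

definition Ccone :: "('h::chilbert) op set \<Rightarrow> 'h op \<Rightarrow> nat \<Rightarrow> 'h opmat set" where
  "Ccone V p n = {x \<in> opmats (2*n) V. x = opmat_star (2*n) x \<and>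
      opmat_pos (2*n) (opmat_mult (2*n) (pq_diag n p) (opmat_mult (2*n) x (pq_diag n p)))}"

inductive_set opmat_span :: "('h::chilbert) opmat set \<Rightarrow> 'h opmat set" for S where
  span_zero: "(\<lambda>i j. zop) \<in> opmat_span S"
| span_base: "x \<in> S \<Longrightarrow> x \<in> opmat_span S"
| span_add: "x \<in> opmat_span S \<Longrightarrow> y \<in> opmat_span S \<Longrightarrow> opmat_add 2 x y \<in> opmat_span S"
| span_scale: "x \<in> opmat_span S \<Longrightarrow> opmat_scale 2 c x \<in> opmat_span S"

definition Jpq :: "('h::chilbert) op set \<Rightarrow> 'h op \<Rightarrow> 'h opmat set" where
  "Jpq V p = opmat_span (Ccone V p 1 \<inter> {x. opmat_scale 2 (-1) x \<in> Ccone V p 1})"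

text \<open>Canonical shuffle M_n(M_2(V)) \<rightarrow> M_2(M_n(V)) = M_{2n}(V):
  entry (i,j) of block (a,b) sits at position (a*n+i, b*n+j).\<close>
definition shuffle :: "nat \<Rightarrow> (nat \<Rightarrow> nat \<Rightarrow> ('h::chilbert) opmat) \<Rightarrow> 'h opmat" where
  "shuffle n y = (\<lambda>r s. if r < 2*n \<and> s < 2*n then y (r mod n) (s mod n) (r div n) (s div n) else zop)"

section \<open>Abstract operator systems (Choi--Effros)\<close>

record 'w osys =
  carrier :: "'w set"
  zero :: 'w
  add :: "'w \<Rightarrow> 'w \<Rightarrow> 'w"
  scale :: "complex \<Rightarrow> 'w \<Rightarrow> 'w"
  star :: "'w \<Rightarrow> 'w"
  cone :: "nat \<Rightarrow> (nat \<Rightarrow> nat \<Rightarrow> 'w) set"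
  unit :: 'w

definition mats :: "('w, 'b) osys_scheme \<Rightarrow> nat \<Rightarrow> (nat \<Rightarrow> nat \<Rightarrow> 'w) set" where
  "mats S n = {X. \<forall>i j. (i < n \<and> j < n \<longrightarrow> X i j \<in> carrier S) \<and> (\<not> (i < n \<and> j < n) \<longrightarrow> X i j = zero S)}"

definition mzero :: "('w, 'b) osys_scheme \<Rightarrow> nat \<Rightarrow> nat \<Rightarrow> 'w" where
  "mzero S = (\<lambda>i j. zero S)"

definition madd :: "('w, 'b) osys_scheme \<Rightarrow> nat \<Rightarrow> (nat \<Rightarrow> nat \<Rightarrow> 'w) \<Rightarrow> (nat \<Rightarrow> nat \<Rightarrow> 'w) \<Rightarrow> nat \<Rightarrow> nat \<Rightarrow> 'w" where
  "madd S n X Y = (\<lambda>i j. if i < n \<and> j < n then add S (X i j) (Y i j) else zero S)"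

definition mscale :: "('w, 'b) osys_scheme \<Rightarrow> nat \<Rightarrow> complex \<Rightarrow> (nat \<Rightarrow> nat \<Rightarrow> 'w) \<Rightarrow> nat \<Rightarrow> nat \<Rightarrow> 'w" where
  "mscale S n c X = (\<lambda>i j. if i < n \<and> j < n then scale S c (X i j) else zero S)"

definition mstar :: "('w, 'b) osys_scheme \<Rightarrow> nat \<Rightarrow> (nat \<Rightarrow> nat \<Rightarrow> 'w) \<Rightarrow> nat \<Rightarrow> nat \<Rightarrow> 'w" where
  "mstar S n X = (\<lambda>i j. if i < n \<and> j < n then star S (X j i) else zero S)"

definition hermitians :: "('w, 'b) osys_scheme \<Rightarrow> nat \<Rightarrow> (nat \<Rightarrow> nat \<Rightarrow> 'w) set" where
  "hermitians S n = {X \<in> mats S n. mstar S n X = X}"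

definition wsum :: "('w, 'b) osys_scheme \<Rightarrow> (nat \<Rightarrow> 'w) \<Rightarrow> nat \<Rightarrow> 'w" where
  "wsum S f n = foldr (add S) (map f [0..<n]) (zero S)"

definition congr :: "('w, 'b) osys_scheme \<Rightarrow> nat \<Rightarrow> nat \<Rightarrow> (nat \<Rightarrow> nat \<Rightarrow> complex) \<Rightarrow> (nat \<Rightarrow> nat \<Rightarrow> 'w) \<Rightarrow> nat \<Rightarrow> nat \<Rightarrow> 'w" where
  "congr S n m \<alpha> X = (\<lambda>k l. if k < m \<and> l < m then
      wsum S (\<lambda>i. wsum S (\<lambda>j. scale S (cnj (\<alpha> i k) * \<alpha> j l) (X i j)) n) n else zero S)"

definition unitmat :: "('w, 'b) osys_scheme \<Rightarrow> nat \<Rightarrow> nat \<Rightarrow> nat \<Rightarrow> 'w" where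
  "unitmat S n = (\<lambda>i j. if i < n \<and> j < n \<and> i = j then unit S else zero S)"

definition complex_vector_space :: "('w, 'b) osys_scheme \<Rightarrow> bool" where
  "complex_vector_space S \<longleftrightarrow>
     zero S \<in> carrier S \<and>
     (\<forall>x\<in>carrier S. \<forall>y\<in>carrier S. add S x y \<in> carrier S) \<and>
     (\<forall>c. \<forall>x\<in>carrier S. scale S c x \<in> carrier S) \<and>
     (\<forall>x\<in>carrier S. \<forall>y\<in>carrier S. \<forall>z\<in>carrier S. add S (add S x y) z = add S x (add S y z)) \<and>
     (\<forall>x\<in>carrier S. \<forall>y\<in>carrier S. add S x y = add S y x) \<and>
     (\<forall>x\<in>carrier S. add S (zero S) x = x) \<and>
     (\<forall>x\<in>carrier S. \<exists>y\<in>carrier S. add S x y = zero S) \<and>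
     (\<forall>a. \<forall>x\<in>carrier S. \<forall>y\<in>carrier S. scale S a (add S x y) = add S (scale S a x) (scale S a y)) \<and>
     (\<forall>a b. \<forall>x\<in>carrier S. scale S (a + b) x = add S (scale S a x) (scale S b x)) \<and>
     (\<forall>a b. \<forall>x\<in>carrier S. scale S a (scale S b x) = scale S (a * b) x) \<and>
     (\<forall>x\<in>carrier S. scale S 1 x = x)"

definition star_vector_space :: "('w, 'b) osys_scheme \<Rightarrow> bool" where
  "star_vector_space S \<longleftrightarrow> complex_vector_space S \<and>
     (\<forall>x\<in>carrier S. star S x \<in> carrier S) \<and>
     (\<forall>x\<in>carrier S. star S (star S x) = x) \<and>
     (\<forall>x\<in>carrier S. \<forall>y\<in>carrier S. star S (add S x y) = add S (star S x) (star S y)) \<and>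
     (\<forall>c. \<forall>x\<in>carrier S. star S (scale S c x) = scale S (cnj c) (star S x))"

definition matrix_ordered :: "('w, 'b) osys_scheme \<Rightarrow> bool" where
  "matrix_ordered S \<longleftrightarrow> star_vector_space S \<and>
     (\<forall>n\<ge>1. cone S n \<subseteq> hermitians S n) \<and>
     (\<forall>n\<ge>1. \<forall>X\<in>cone S n. \<forall>Y\<in>cone S n. madd S n X Y \<in> cone S n) \<and>
     (\<forall>n\<ge>1. \<forall>r::real. r \<ge> 0 \<longrightarrow> (\<forall>X\<in>cone S n. mscale S n (complex_of_real r) X \<in> cone S n)) \<and>
     (\<forall>n\<ge>1. cone S n \<inter> {X. mscale S n (-1) X \<in> cone S n} = {mzero S}) \<and>
     (\<forall>n\<ge>1. \<forall>m\<ge>1. \<forall>\<alpha>. \<forall>X\<in>cone S n. congr S n m \<alpha> X \<in> cone S m)"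

definition archimedean_matrix_order_unit :: "('w, 'b) osys_scheme \<Rightarrow> bool" where
  "archimedean_matrix_order_unit S \<longleftrightarrow> unit S \<in> carrier S \<and> star S (unit S) = unit S \<and>
     (\<forall>n\<ge>1. \<forall>X\<in>hermitians S n. \<exists>r::real. r > 0 \<and>
          madd S n (mscale S n (complex_of_real r) (unitmat S n)) X \<in> cone S n) \<and>
     (\<forall>n\<ge>1. \<forall>X\<in>hermitians S n.
          (\<forall>r::real. r > 0 \<longrightarrow> madd S n (mscale S n (complex_of_real r) (unitmat S n)) X \<in> cone S n)
          \<longrightarrow> X \<in> cone S n)"

definition operator_system :: "('w, 'b) osys_scheme \<Rightarrow> bool" where
  "operator_system S \<longleftrightarrow> matrix_ordered S \<and> archimedean_matrix_order_unit S"

definition coset :: "('h::chilbert) opmat set \<Rightarrow> 'h opmat \<Rightarrow> 'h opmat set" where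
  "coset J x = {opmat_add 2 x j | j. j \<in> J}"

definition rep :: "('h::chilbert) opmat set \<Rightarrow> 'h opmat" where
  "rep A = (SOME x. x \<in> A)"

definition quotient_osys :: "('h::chilbert) op set \<Rightarrow> 'h op \<Rightarrow> ('h opmat set) osys" where
  "quotient_osys V p = (let J = Jpq V p in
     \<lparr> carrier = coset J ` opmats 2 V,
       zero = coset J (\<lambda>i j. zop),
       add = (\<lambda>A B. coset J (opmat_add 2 (rep A) (rep B))),
       scale = (\<lambda>c A. coset J (opmat_scale 2 c (rep A))),
       star = (\<lambda>A. coset J (opmat_star 2 (rep A))),
       cone = (\<lambda>n. {(\<lambda>i j. if i < n \<and> j < n then coset J (y i j) else coset J (\<lambda>i j. zop)) | y.
                     (\<forall>i j. (i < n \<and> j < n \<longrightarrow> y i j \<in> opmats 2 V) \<and>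
                            (\<not> (i < n \<and> j < n) \<longrightarrow> y i j = (\<lambda>a b. zop)))
                     \<and> shuffle n y \<in> Ccone V p n}),
       unit = coset J (pq_diag 1 p) \<rparr>)"

end

theory Submission
  imports Defs
begin

interpretation cs: module "cscale :: complex \<Rightarrow> 'a::complex_inner_space \<Rightarrow> 'a"
  by standard (simp_all add: cscale_add_right cscale_add_left cscale_cscale cscale_one)

lemma cinner_add_right: "cinner x (y + z) = cinner x y + cinner x z"
  by (metis cinner_commute cinner_add_left complex_cnj_add)

lemma cinner_cscale_right: "cinner x (cscale a y) = cnj a * cinner x y"
  by (metis cinner_commute cinner_cscale_left complex_cnj_mult)

interpretation cil: additive "\<lambda>x. cinner x (y::'a::complex_inner_space)"
  by standard (rule cinner_add_left)
interpretation cir: additive "\<lambda>y. cinner (x::'a::complex_inner_space) y"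
  by standard (rule cinner_add_right)

lemma cinner_zero_left[simp]: "cinner 0 x = 0" by (rule cil.zero)
lemma cinner_zero_right[simp]: "cinner x 0 = 0" by (rule cir.zero)
lemma cinner_minus_left: "cinner (- x) y = - cinner x y" by (rule cil.minus)
lemma cinner_minus_right: "cinner x (- y) = - cinner x y" by (rule cir.minus)
lemma cinner_diff_left: "cinner (x - z) y = cinner x y - cinner z y" by (rule cil.diff)
lemma cinner_diff_right: "cinner x (y - z) = cinner x y - cinner x z" by (rule cir.diff)
lemma cinner_sum_left: "cinner (sum f A) y = (\<Sum>i\<in>A. cinner (f i) y)" by (rule cil.sum)
lemma cinner_sum_right: "cinner x (sum f A) = (\<Sum>i\<in>A. cinner x (f i))" by (rule cir.sum)

lemma cinner_self_Im[simp]: "Im (cinner x x) = 0"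
  using cinner_self_nonneg by blast
lemma cinner_self_Re_ge[simp]: "Re (cinner x x) \<ge> 0"
  using cinner_self_nonneg by blast
lemma cinner_self_real: "cinner x x = complex_of_real (Re (cinner x x))"
  by (simp add: complex_eq_iff)
lemma cnorm_ge0[simp]: "cnorm x \<ge> 0" by (simp add: cnorm_def)
lemma cnorm_sq: "(cnorm x)\<^sup>2 = Re (cinner x x)" by (simp add: cnorm_def)
lemma cinner_self_eq_zero_iff: "cinner x x = 0 \<longleftrightarrow> x = 0"
  using cinner_self_eq_zero by auto
lemma cnorm_eq0[simp]: "cnorm x = 0 \<longleftrightarrow> x = 0"
  by (metis cnorm_def cinner_self_eq_zero_iff cinner_self_real real_sqrt_eq_zero_cancel_iff
      cinner_zero_left of_real_0 zero_complex.simps(1) real_sqrt_zero)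

lemma cinner_swap_cnj: "cinner y x = cnj (cinner x y)" by (rule cinner_commute)

lemma cauchy_schwarz_sq:
  fixes x y :: "'a::complex_inner_space"
  shows "(cmod (cinner x y))\<^sup>2 \<le> Re (cinner x x) * Re (cinner y y)"
proof (cases "y = 0")
  case True then show ?thesis by simp
next
  case False
  define n where "n = Re (cinner y y)"
  define c where "c = cinner x y"
  have n0: "n > 0" unfolding n_def
    using False cinner_self_eq_zero_iff cinner_self_real cinner_self_Re_ge
    by (metis less_eq_real_def of_real_0)
  have yy: "cinner y y = of_real n" unfolding n_def by (rule cinner_self_real)
  have yx: "cinner y x = cnj c" unfolding c_def by (rule cinner_commute)
  define t where "t = c / of_real n"
  have "cinner (x - cscale t y) (x - cscale t y)
     = cinner x x - cnj t * c - t * cnj c + t * cnj t * of_real n"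
    by (simp add: cinner_diff_left cinner_diff_right cinner_cscale_left cinner_cscale_right
         yy yx c_def algebra_simps)
  also have "\<dots> = cinner x x - of_real ((cmod c)\<^sup>2 / n)"
  proof -
    have cc: "c * cnj c = of_real ((cmod c)\<^sup>2)" by (rule complex_norm_square[symmetric])
    have "cnj t * c = of_real ((cmod c)\<^sup>2 / n)" unfolding t_def using cc
      by (simp add: mult.commute)
    moreover have "t * cnj c = of_real ((cmod c)\<^sup>2 / n)" unfolding t_def using cc
      by simp
    moreover have "t * cnj t * of_real n = of_real ((cmod c)\<^sup>2 / n)" unfolding t_def using cc n0
      by (simp add: field_simps)
    ultimately show ?thesis by simp
  qed
  finally have "0 \<le> Re (cinner x x) - (cmod c)\<^sup>2 / n"
    by (metis cinner_self_Re_ge minus_complex.simps(1) Re_complex_of_real)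
  then have "(cmod c)\<^sup>2 / n \<le> Re (cinner x x)" by simp
  then show ?thesis using n0 unfolding c_def n_def[symmetric]
    by (simp add: divide_le_eq mult.commute)
qed

lemma cauchy_schwarz: "cmod (cinner x y) \<le> cnorm x * cnorm y"
proof -
  have "(cmod (cinner x y))\<^sup>2 \<le> (cnorm x * cnorm y)\<^sup>2"
    using cauchy_schwarz_sq[of x y] by (simp add: power_mult_distrib cnorm_sq)
  then show ?thesis
    by (meson cnorm_ge0 mult_nonneg_nonneg power2_le_imp_le)
qed

lemma cnorm_sq_add: "(cnorm (x + y))\<^sup>2 = (cnorm x)\<^sup>2 + (cnorm y)\<^sup>2 + 2 * Re (cinner x y)"
proof -
  have "Re (cinner y x) = Re (cinner x y)" by (subst cinner_commute) simp
  then show ?thesis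
    by (simp add: cnorm_sq cinner_add_left cinner_add_right)
qed

lemma cnorm_triangle: "cnorm (x + y) \<le> cnorm x + cnorm y"
proof -
  have "Re (cinner x y) \<le> cnorm x * cnorm y"
    using cauchy_schwarz[of x y] complex_Re_le_cmod order_trans by blast
  then have "(cnorm (x + y))\<^sup>2 \<le> (cnorm x + cnorm y)\<^sup>2"
    by (simp add: cnorm_sq_add power2_sum)
  then show ?thesis
    by (meson add_nonneg_nonneg cnorm_ge0 power2_le_imp_le)
qed

lemma cnorm_cscale: "cnorm (cscale c x) = cmod c * cnorm x"
proof -
  have "cinner (cscale c x) (cscale c x) = of_real ((cmod c)\<^sup>2) * cinner x x"
    by (simp add: cinner_cscale_left cinner_cscale_right complex_norm_square[symmetric] algebra_simps del: of_real_power)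
  then have "Re (cinner (cscale c x) (cscale c x)) = (cmod c)\<^sup>2 * Re (cinner x x)"
    by simp
  then show ?thesis unfolding cnorm_def
    by (simp add: real_sqrt_mult)
qed

lemma cnorm_minus: "cnorm (- x) = cnorm x"
  by (simp add: cnorm_def cinner_minus_left cinner_minus_right)

lemma cnorm_diff_commute: "cnorm (x - y) = cnorm (y - x)"
  by (metis cnorm_minus minus_diff_eq)

lemma parallelogram:
  "(cnorm (a + b))\<^sup>2 + (cnorm (a - b))\<^sup>2 = 2 * (cnorm a)\<^sup>2 + 2 * (cnorm b)\<^sup>2"
proof -
  have "(cnorm (a - b))\<^sup>2 = (cnorm a)\<^sup>2 + (cnorm b)\<^sup>2 - 2 * Re (cinner a b)"
    using cnorm_sq_add[of a "- b"] by (simp add: cnorm_minus cinner_minus_right)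
  then show ?thesis using cnorm_sq_add[of a b] by simp
qed

lemma sq_less_sqrt: "0 \<le> a \<Longrightarrow> a < sqrt b \<Longrightarrow> a\<^sup>2 < b"
  by (metis abs_of_nonneg real_sqrt_abs real_sqrt_less_iff real_sqrt_pow2_iff power2_eq_square
      not_less order.strict_trans1 real_sqrt_lt_0_iff zero_le_power2)

lemma riesz:
  fixes f :: "'a::chilbert \<Rightarrow> complex"
  assumes add: "\<And>x y. f (x + y) = f x + f y"
    and hom: "\<And>c x. f (cscale c x) = c * f x"
    and bnd: "\<And>x. cmod (f x) \<le> K * cnorm x"
  shows "\<exists>z. \<forall>x. f x = cinner x z"
proof (cases "\<forall>x. f x = 0")
  case True then show ?thesis by (intro exI[of _ 0]) simp
next
  case False
  then obtain x0 where fx0: "f x0 \<noteq> 0" by blast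
  interpret fa: additive f by standard (rule add)
  define K' where "K' = abs K + 1"
  have bnd': "cmod (f x) \<le> K' * cnorm x" for x
  proof -
    have "K * cnorm x \<le> K' * cnorm x" unfolding K'_def
      by (intro mult_right_mono) auto
    then show ?thesis using bnd[of x] by linarith
  qed
  have K'pos: "K' > 0" by (simp add: K'_def)
  define D where "D = (\<lambda>m. cnorm (x0 - m)) ` {m. f m = 0}"
  define d where "d = Inf D"
  have Dne: "D \<noteq> {}" using fa.zero D_def by auto
  have Dbdd: "bdd_below D" unfolding D_def by (rule bdd_belowI[of _ 0]) auto
  have d_le: "d \<le> cnorm (x0 - m)" if "f m = 0" for m
    unfolding d_def using Dbdd that by (intro cInf_lower) (auto simp: D_def)
  have d0: "d \<ge> 0" unfolding d_def using Dne by (intro cInf_greatest) (auto simp: D_def)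
  have approx: "\<exists>m. f m = 0 \<and> (cnorm (x0 - m))\<^sup>2 < d\<^sup>2 + e" if "e > 0" for e
  proof -
    have "d < sqrt (d\<^sup>2 + e)" using d0 that
      by (metis abs_of_nonneg less_add_same_cancel1 real_sqrt_abs real_sqrt_less_mono)
    then obtain v where "v \<in> D" "v < sqrt (d\<^sup>2 + e)" using cInf_lessD[OF Dne] d_def by blast
    then obtain m where "f m = 0" "cnorm (x0 - m) < sqrt (d\<^sup>2 + e)" by (auto simp: D_def)
    then show ?thesis using sq_less_sqrt[OF cnorm_ge0] by blast
  qed
  have "\<forall>k::nat. \<exists>m. f m = 0 \<and> (cnorm (x0 - m))\<^sup>2 < d\<^sup>2 + 1 / (real k + 1)"
    using approx by simp
  then obtain ms where ms0: "\<And>k. f (ms k) = 0"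
    and ms1: "\<And>k. (cnorm (x0 - ms k))\<^sup>2 < d\<^sup>2 + 1 / (real k + 1)"
    by metis
  have close: "(cnorm (ms k - ms l))\<^sup>2 \<le> 2 / (real k + 1) + 2 / (real l + 1)" for k l
  proof -
    define a where "a = x0 - ms k"
    define b where "b = x0 - ms l"
    define mid where "mid = cscale (1/2) (ms k + ms l)"
    have fmid: "f mid = 0" unfolding mid_def using hom add ms0 by simp
    have "a + b = cscale 2 (x0 - mid)"
      unfolding a_def b_def mid_def by (simp add: algebra_simps cs.scale_right_diff_distrib
          cs.scale_left_distrib[of 1 1, simplified] cs.scale_right_distrib)
    then have "cnorm (a + b) = 2 * cnorm (x0 - mid)" by (simp add: cnorm_cscale)
    then have ab: "(cnorm (a + b))\<^sup>2 \<ge> 4 * d\<^sup>2"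
      using d_le[OF fmid] d0 by (simp add: power_mult_distrib power_mono)
    have "a - b = ms l - ms k" unfolding a_def b_def by simp
    then have "(cnorm (ms k - ms l))\<^sup>2 = 2 * (cnorm a)\<^sup>2 + 2 * (cnorm b)\<^sup>2 - (cnorm (a + b))\<^sup>2"
      using parallelogram[of a b] cnorm_diff_commute[of "ms l" "ms k"] by simp
    also have "\<dots> \<le> 2 * (d\<^sup>2 + 1 / (real k + 1)) + 2 * (d\<^sup>2 + 1 / (real l + 1)) - 4 * d\<^sup>2"
    proof -
      have aux: "2*A + 2*B - C \<le> 2*(dd+e1) + 2*(dd+e2) - 4*(dd::real)"
        if "A < dd + e1" "B < dd + e2" "4*dd \<le> C" for A B C e1 e2 dd
        using that by (simp add: algebra_simps)
      show ?thesis using aux[OF ms1[of k] ms1[of l] ab] unfolding a_def b_def .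
    qed
    finally show ?thesis by simp
  qed
  have cauchy: "\<forall>e>0. \<exists>N::nat. \<forall>m\<ge>N. \<forall>n\<ge>N. sqrt (Re (cinner (ms m - ms n) (ms m - ms n))) < e"
  proof (intro allI impI)
    fix e :: real assume e: "e > 0"
    obtain N0 :: nat where "4 / e\<^sup>2 < real N0" using reals_Archimedean2 by blast
    then have N: "4 / e\<^sup>2 < real N0 + 1" by simp
    define N where "N = N0"
    have "4 < (real N + 1) * e\<^sup>2" using N e by (simp add: divide_less_eq N_def)
    then have "4 / (real N + 1) < e\<^sup>2" by (simp add: divide_less_eq mult.commute)
    show "\<exists>N::nat. \<forall>m\<ge>N. \<forall>n\<ge>N. sqrt (Re (cinner (ms m - ms n) (ms m - ms n))) < e"
    proof (intro exI allI impI)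
      fix m n assume mn: "m \<ge> N" "n \<ge> N"
      have "2 / (real m + 1) \<le> 2 / (real N + 1)" "2 / (real n + 1) \<le> 2 / (real N + 1)"
        using mn by (auto intro!: divide_left_mono)
      then have "(cnorm (ms m - ms n))\<^sup>2 < e\<^sup>2"
        using close[of m n] \<open>4 / (real N + 1) < e\<^sup>2\<close> by simp
      then have "cnorm (ms m - ms n) < e" using e
        by (simp add: power2_less_imp_less less_imp_le)
      then show "sqrt (Re (cinner (ms m - ms n) (ms m - ms n))) < e" by (simp add: cnorm_def)
    qed
  qed
  obtain L where L: "\<And>e. e > 0 \<Longrightarrow> \<exists>N::nat. \<forall>n\<ge>N. cnorm (ms n - L) < e"
    using chilbert_complete[OF cauchy] unfolding cnorm_def by blast
  have fL: "f L = 0"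
  proof (rule ccontr)
    assume ne: "f L \<noteq> 0"
    define e where "e = cmod (f L) / K'"
    have e: "e > 0" using ne K'pos by (simp add: e_def)
    obtain N where "cnorm (ms N - L) < e" using L[OF e] by blast
    have "f (L - ms N) = f L" using ms0 fa.diff by simp
    then have "cmod (f L) \<le> K' * cnorm (L - ms N)" using bnd'[of "L - ms N"] by simp
    also have "\<dots> < K' * e" using \<open>cnorm (ms N - L) < e\<close> cnorm_diff_commute[of L "ms N"] K'pos by simp
    also have "\<dots> = cmod (f L)" using K'pos by (simp add: e_def)
    finally show False by simp
  qed
  define z where "z = x0 - L"
  have fz: "f z = f x0" unfolding z_def using fL fa.diff by simp
  have zd: "cnorm z \<le> d"
  proof (rule ccontr)
    assume "\<not> cnorm z \<le> d"
    define \<delta> where "\<delta> = cnorm z - d"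
    have \<delta>: "\<delta> > 0" using \<open>\<not> cnorm z \<le> d\<close> by (simp add: \<delta>_def)
    define e where "e = min ((\<delta>/3)\<^sup>2) (\<delta>/3)"
    have e: "e > 0" using \<delta> by (simp add: e_def)
    obtain N1 where N1: "\<forall>n\<ge>N1. cnorm (ms n - L) < e" using L[OF e] by blast
    obtain N20 :: nat where "1 / e < real N20" using reals_Archimedean2 by blast
    then have N2': "1 / e < real N20 + 1" by simp
    define N2 where "N2 = N20"
    have "1 < (real N2 + 1) * e" using N2' e by (simp add: divide_less_eq N2_def)
    define n where "n = max N1 N2"
    have "1 / (real n + 1) \<le> 1 / (real N2 + 1)" unfolding n_def by (auto intro!: divide_left_mono)
    also have "\<dots> < e" using \<open>1 < (real N2 + 1) * e\<close> by (simp add: divide_less_eq mult.commute)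
    finally have "1 / (real n + 1) < e" .
    then have "(cnorm (x0 - ms n))\<^sup>2 < d\<^sup>2 + e" using ms1[of n] by linarith
    also have "\<dots> \<le> (d + \<delta>/3)\<^sup>2"
    proof -
      have "e \<le> (\<delta>/3)\<^sup>2" unfolding e_def by simp
      moreover have "0 \<le> 2 * d * (\<delta>/3)" using d0 \<delta> by simp
      ultimately show ?thesis unfolding power2_sum by linarith
    qed
    finally have a: "cnorm (x0 - ms n) < d + \<delta>/3"
      using d0 \<delta> by (simp add: power2_less_imp_less)
    have "e \<le> \<delta>/3" unfolding e_def by simp
    moreover have "cnorm (ms n - L) < e" using N1 unfolding n_def by simp
    ultimately have b: "cnorm (ms n - L) < \<delta>/3" by linarith
    have "cnorm z \<le> cnorm (x0 - ms n) + cnorm (ms n - L)"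
      unfolding z_def using cnorm_triangle[of "x0 - ms n" "ms n - L"] by simp
    then show False using a b \<delta>_def \<delta> by linarith
  qed
  have orth: "cinner m z = 0" if fm: "f m = 0" for m
  proof -
    define c where "c = cinner m z"
    define mm where "mm = Re (cinner m m)"
    have mm0: "mm \<ge> 0" by (simp add: mm_def)
    have key: "2 * s * (cmod c)\<^sup>2 \<le> s\<^sup>2 * (cmod c)\<^sup>2 * mm" if s: "s > 0" for s :: real
    proof -
      define t where "t = complex_of_real s * cnj c"
      have "f (L + cscale t m) = 0" using fL fm add hom by simp
      then have "d \<le> cnorm (x0 - (L + cscale t m))" by (rule d_le)
      moreover have "x0 - (L + cscale t m) = z - cscale t m" unfolding z_def by simp
      ultimately have "d \<le> cnorm (z - cscale t m)" by simp
      then have A: "(cnorm z)\<^sup>2 \<le> (cnorm (z - cscale t m))\<^sup>2"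
        using zd by (meson cnorm_ge0 order_trans power_mono)
      have B: "(cnorm (z - cscale t m))\<^sup>2 = Re (cinner z z - cnj t * cinner z m - t * cinner m z
          + t * cnj t * cinner m m)"
        unfolding cnorm_sq by (simp add: cinner_diff_left cinner_diff_right cinner_cscale_left
            cinner_cscale_right algebra_simps)
      have C: "cinner z z - cnj t * cinner z m - t * cinner m z + t * cnj t * cinner m m
          = of_real ((cnorm z)\<^sup>2 - 2 * s * (cmod c)\<^sup>2 + s\<^sup>2 * (cmod c)\<^sup>2 * mm)"
      proof -
        have cc: "c * cnj c = of_real ((cmod c)\<^sup>2)" by (rule complex_norm_square[symmetric])
        have zm: "cinner z m = cnj c" unfolding c_def by (rule cinner_commute)
        have mmm: "cinner m m = of_real mm" unfolding mm_def by (rule cinner_self_real)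
        have e1: "cnj t * cinner z m = of_real (s * (cmod c)\<^sup>2)" unfolding t_def zm using cc
          by (simp add: mult.commute del: of_real_power)
        have e2: "t * cinner m z = of_real (s * (cmod c)\<^sup>2)" unfolding t_def c_def[symmetric]
          using cc by (simp add: mult.commute del: of_real_power)
        have e3: "t * cnj t * cinner m m = of_real (s\<^sup>2 * (cmod c)\<^sup>2 * mm)"
          unfolding t_def mmm using cc by (simp add: power2_eq_square algebra_simps del: of_real_power)
        have e4: "cinner z z = of_real ((cnorm z)\<^sup>2)" unfolding cnorm_sq by (rule cinner_self_real)
        have r: "(cnorm z)\<^sup>2 - s * (cmod c)\<^sup>2 - s * (cmod c)\<^sup>2 + s\<^sup>2 * (cmod c)\<^sup>2 * mm
           = (cnorm z)\<^sup>2 - 2 * s * (cmod c)\<^sup>2 + s\<^sup>2 * (cmod c)\<^sup>2 * mm" by simp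
        show ?thesis unfolding e1 e2 e3 e4
          by (simp only: of_real_diff[symmetric] of_real_add[symmetric] r)
      qed
      show ?thesis using A unfolding B C Re_complex_of_real by linarith
    qed
    have "2 * (cmod c)\<^sup>2 \<le> (cmod c)\<^sup>2"
    proof -
      define s where "s = 1 / (mm + 1)"
      have s: "s > 0" using mm0 by (simp add: s_def)
      have k: "2 * s * (cmod c)\<^sup>2 \<le> s\<^sup>2 * (cmod c)\<^sup>2 * mm" using key[OF s] .
      have "s\<^sup>2 * (cmod c)\<^sup>2 * mm = s * ((cmod c)\<^sup>2 * (mm / (mm + 1)))"
        unfolding s_def by (simp add: power2_eq_square)
      also have "\<dots> \<le> s * ((cmod c)\<^sup>2 * 1)" using mm0 s
        by (intro mult_left_mono) auto
      finally have "s * (2 * (cmod c)\<^sup>2) \<le> s * (cmod c)\<^sup>2" using k by (simp add: mult.assoc mult.left_commute)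
      then show ?thesis using s by (simp only: mult_le_cancel_left_pos)
    qed
    then have "cmod c = 0" by simp
    then show ?thesis by (simp add: c_def)
  qed
  have "z \<noteq> 0"
  proof
    assume "z = 0"
    then have "f z = 0" using fa.zero by simp
    then show False using fz fx0 by simp
  qed
  then have zz: "cinner z z \<noteq> 0" by (simp add: cinner_self_eq_zero_iff)
  show ?thesis
  proof (intro exI allI)
    fix x
    define w where "w = cscale (f x) z - cscale (f z) x"
    have "f w = f x * f z - f z * f x" unfolding w_def fa.diff hom by (rule refl)
    then have "f w = 0" by (simp add: mult.commute)
    then have "cinner w z = 0" by (rule orth)
    moreover have "cinner w z = f x * cinner z z - f z * cinner x z"
      unfolding w_def cinner_diff_left cinner_cscale_left by (rule refl)
    ultimately have "f x * cinner z z = f z * cinner x z" by simp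
    then have "f x = f z * cinner x z / cinner z z" using zz by (simp add: eq_divide_eq)
    also have "\<dots> = cinner x (cscale (cnj (f z / cinner z z)) z)"
      unfolding cinner_cscale_right complex_cnj_cnj by simp
    finally show "f x = cinner x (cscale (cnj (f z / cinner z z)) z)" .
  qed
qed


lemma adj_unique:
  fixes T S :: "('h::chilbert) op"
  assumes "\<forall>x y. cinner (T x) y = cinner x (S y)"
  shows "adj T = S"
proof -
  have uniq: "S' = S" if "\<forall>x y. cinner (T x) y = cinner x (S' y)" for S'
  proof (rule ext)
    fix y
    have "\<forall>x. cinner x (S' y - S y) = 0" using that assms by (simp add: cinner_diff_right)
    then have "cinner (S' y - S y) (S' y - S y) = 0" by blast
    then show "S' y = S y" by (simp add: cinner_self_eq_zero_iff)
  qed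
  show ?thesis unfolding adj_def using assms uniq by (intro the_equality) auto
qed

lemma bop_add: "T \<in> bop \<Longrightarrow> T (x + y) = T x + T y" by (simp add: bop_def)
lemma bop_scale: "T \<in> bop \<Longrightarrow> T (cscale c x) = cscale c (T x)" by (simp add: bop_def)
lemma bop_additive: "T \<in> bop \<Longrightarrow> Modules.additive T" by (simp add: Modules.additive_def bop_add)
lemma bop_zero: "T \<in> bop \<Longrightarrow> T 0 = 0" using Modules.additive.zero bop_additive by blast
lemma bop_minus: "T \<in> bop \<Longrightarrow> T (- x) = - T x" using Modules.additive.minus bop_additive by blast
lemma bop_diff: "T \<in> bop \<Longrightarrow> T (x - y) = T x - T y" using Modules.additive.diff bop_additive by blast
lemma bop_sum: "T \<in> bop \<Longrightarrow> T (sum f A) = (\<Sum>i\<in>A. T (f i))" using Modules.additive.sum bop_additive by blast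

lemma bop_adjoint_exists:
  assumes "T \<in> bop"
  shows "\<exists>S. \<forall>x y. cinner (T x) y = cinner x (S y)"
proof -
  from assms obtain K where lin1: "\<forall>x y. T (x + y) = T x + T y"
    and lin2: "\<forall>c x. T (cscale c x) = cscale c (T x)"
    and bnd: "\<forall>x. cnorm (T x) \<le> K * cnorm x" unfolding bop_def by blast
  have "\<forall>y. \<exists>z. \<forall>x. cinner (T x) y = cinner x z"
  proof
    fix y
    show "\<exists>z. \<forall>x. cinner (T x) y = cinner x z"
    proof (rule riesz[where K = "K * cnorm y"])
      show "cinner (T (x + x')) y = cinner (T x) y + cinner (T x') y" for x x'
        using lin1 by (simp add: cinner_add_left)
      show "cinner (T (cscale c x)) y = c * cinner (T x) y" for c x
        using lin2 by (simp add: cinner_cscale_left)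
      show "cmod (cinner (T x) y) \<le> K * cnorm y * cnorm x" for x
      proof -
        have "cmod (cinner (T x) y) \<le> cnorm (T x) * cnorm y" by (rule cauchy_schwarz)
        also have "\<dots> \<le> K * cnorm x * cnorm y" using bnd by (intro mult_right_mono) auto
        finally show ?thesis by (simp add: algebra_simps)
      qed
    qed
  qed
  then obtain S where "\<forall>y x. cinner (T x) y = cinner x (S y)" by metis
  then show ?thesis by blast
qed

lemma adj_prop: "T \<in> bop \<Longrightarrow> cinner (T x) y = cinner x (adj T y)"
proof -
  assume "T \<in> bop"
  then obtain S where S: "\<forall>x y. cinner (T x) y = cinner x (S y)" using bop_adjoint_exists by blast
  then have "adj T = S" by (rule adj_unique)
  then show ?thesis using S by simp
qed

lemma adj_prop2: "T \<in> bop \<Longrightarrow> cinner x (T y) = cinner (adj T x) y"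
  by (metis adj_prop cinner_commute)

lemma adj_adj: "T \<in> bop \<Longrightarrow> adj (adj T) = T"
  by (rule adj_unique) (simp add: adj_prop2)

definition posform :: "nat \<Rightarrow> (nat \<Rightarrow> ('h::chilbert) op) \<Rightarrow> 'h opmat \<Rightarrow> (nat \<Rightarrow> 'h) \<Rightarrow> complex" where
  "posform N P x \<xi> = (\<Sum>r<N. \<Sum>s<N. cinner (P r (x r s (P s (\<xi> s)))) (\<xi> r))"

definition Pd :: "('h::chilbert) op \<Rightarrow> nat \<Rightarrow> nat \<Rightarrow> 'h op" where
  "Pd p n r = (if r < n then p else (\<lambda>x. x - p x))"

lemma polar_abstract:
  fixes B :: "'x \<Rightarrow> 'x \<Rightarrow> complex"
  assumes z: "\<And>a. B a a = 0"
    and ex: "\<And>a b. B (pl a b) (pl a b) = B a a + B a b + B b a + B b b"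
    and l: "\<And>a b. B (im a) b = \<i> * B a b"
    and r: "\<And>a b. B b (im a) = - \<i> * B b a"
  shows "B a b = 0"
proof -
  have 1: "B a b + B b a = 0" using ex[of a b] z[of a] z[of b] z[of "pl a b"] by simp
  have "B (im a) b + B b (im a) = 0" using ex[of "im a" b] z[of "im a"] z[of b] z[of "pl (im a) b"] by simp
  then have "\<i> * B a b + (- \<i> * B b a) = 0" by (simp only: l r)
  then have "\<i> * (B a b - B b a) = 0" by (simp only: right_diff_distrib) simp
  then have 2: "B a b = B b a" by simp
  from 1 2 have "B a b + B a b = 0" by simp
  then show ?thesis by simp
qed

lemma form_zero:
  fixes F :: "nat \<Rightarrow> nat \<Rightarrow> ('h::chilbert) op"
  assumes linA: "\<And>r s x y. r < N \<Longrightarrow> s < N \<Longrightarrow> F r s (x + y) = F r s x + F r s y"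
    and linS: "\<And>r s c x. r < N \<Longrightarrow> s < N \<Longrightarrow> F r s (cscale c x) = cscale c (F r s x)"
    and z: "\<And>\<xi>. (\<Sum>r<N. \<Sum>s<N. cinner (F r s (\<xi> s)) (\<xi> r)) = 0"
    and rs: "r0 < N" "s0 < N"
  shows "F r0 s0 v = 0"
proof -
  have F0: "F r s 0 = 0" if "r < N" "s < N" for r s
    using linA[OF that, of 0 0] by simp
  define B where "B = (\<lambda>\<xi> \<zeta>. (\<Sum>r<N. \<Sum>s<N. cinner (F r s (\<xi> s)) (\<zeta> r)))"
  define pl where "pl = (\<lambda>(\<xi>::nat \<Rightarrow> 'h) \<zeta> t. \<xi> t + \<zeta> t)"
  define im where "im = (\<lambda>(\<xi>::nat \<Rightarrow> 'h) t. cscale \<i> (\<xi> t))"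
  have Bz: "\<And>a b. B a b = 0"
  proof (rule polar_abstract[where pl = pl and im = im])
    show "B a a = 0" for a using z unfolding B_def by simp
    show "B (pl a b) (pl a b) = B a a + B a b + B b a + B b b" for a b
    proof -
      have "B (pl a b) (pl a b) = (\<Sum>r<N. \<Sum>s<N. cinner (F r s (a s)) (a r) + cinner (F r s (a s)) (b r)
         + cinner (F r s (b s)) (a r) + cinner (F r s (b s)) (b r))"
        unfolding B_def pl_def by (intro sum.cong refl) (simp add: linA cinner_add_left cinner_add_right ac_simps)
      then show ?thesis by (simp add: B_def sum.distrib)
    qed
    show "B (im a) b = \<i> * B a b" for a b
      unfolding B_def im_def by (simp add: linS cinner_cscale_left sum_distrib_left)
    show "B b (im a) = - \<i> * B b a" for a b
      unfolding B_def im_def by (simp add: cinner_cscale_right sum_distrib_left)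
  qed
  define a where "a = (\<lambda>t. if t = s0 then v else (0::'h))"
  define b where "b = (\<lambda>t. if t = r0 then F r0 s0 v else (0::'h))"
  have "B a b = (\<Sum>r<N. if r = r0 then cinner (F r0 s0 v) (F r0 s0 v) else 0)"
    unfolding B_def
  proof (intro sum.cong refl)
    fix r assume r: "r \<in> {..<N}"
    show "(\<Sum>s<N. cinner (F r s (a s)) (b r)) = (if r = r0 then cinner (F r0 s0 v) (F r0 s0 v) else 0)"
    proof (cases "r = r0")
      case True
      have "(\<Sum>s<N. cinner (F r s (a s)) (b r)) = (\<Sum>s<N. if s = s0 then cinner (F r0 s0 v) (F r0 s0 v) else 0)"
        using True r by (intro sum.cong refl) (auto simp: a_def b_def F0)
      also have "\<dots> = cinner (F r0 s0 v) (F r0 s0 v)" using rs by simp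
      finally show ?thesis using True by simp
    next
      case False
      then show ?thesis by (simp add: b_def)
    qed
  qed
  also have "\<dots> = cinner (F r0 s0 v) (F r0 s0 v)"
    using rs by simp
  finally show ?thesis using Bz[of a b] by (simp add: cinner_self_eq_zero_iff)
qed


locale qsetting =
  fixes V :: "('h::chilbert) op set" and p :: "'h op"
  assumes opsys: "concrete_opsys V" and pV: "p \<in> V" and proj: "is_projection p"
begin

lemma V_bop: "T \<in> V \<Longrightarrow> T \<in> bop" using opsys by (auto simp: concrete_opsys_def)
lemma id_V: "id \<in> V" using opsys by (auto simp: concrete_opsys_def)
lemma opadd_V: "S \<in> V \<Longrightarrow> T \<in> V \<Longrightarrow> opadd S T \<in> V" using opsys by (auto simp: concrete_opsys_def)
lemma opscale_V: "T \<in> V \<Longrightarrow> opscale c T \<in> V" using opsys by (auto simp: concrete_opsys_def)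
lemma adj_V: "T \<in> V \<Longrightarrow> adj T \<in> V" using opsys by (auto simp: concrete_opsys_def)

lemma zop_V: "zop \<in> V"
proof -
  have "zop = opscale 0 id" by (rule ext) (simp add: zop_def opscale_def)
  then show ?thesis using opscale_V[OF id_V, of 0] by metis
qed

lemma V_add: "T \<in> V \<Longrightarrow> T (x + y) = T x + T y" using V_bop bop_add by blast
lemma V_scale: "T \<in> V \<Longrightarrow> T (cscale c x) = cscale c (T x)" using V_bop bop_scale by blast
lemma V_zero: "T \<in> V \<Longrightarrow> T 0 = 0" using V_bop bop_zero by blast
lemma V_minus: "T \<in> V \<Longrightarrow> T (- x) = - T x" using V_bop bop_minus by blast
lemma V_diff: "T \<in> V \<Longrightarrow> T (x - y) = T x - T y" using V_bop bop_diff by blast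
lemma V_sum: "T \<in> V \<Longrightarrow> T (sum f A) = (\<Sum>i\<in>A. T (f i))" using V_bop bop_sum by blast
lemma V_adj1: "T \<in> V \<Longrightarrow> cinner (T x) y = cinner x (adj T y)" using V_bop adj_prop by blast
lemma V_adj2: "T \<in> V \<Longrightarrow> cinner x (T y) = cinner (adj T x) y" using V_bop adj_prop2 by blast
lemma V_adj_adj: "T \<in> V \<Longrightarrow> adj (adj T) = T" using V_bop adj_adj by blast

lemma adj_opadd: "S \<in> V \<Longrightarrow> T \<in> V \<Longrightarrow> adj (opadd S T) = opadd (adj S) (adj T)"
  by (rule adj_unique) (simp add: opadd_def cinner_add_left cinner_add_right V_adj1)

lemma adj_opscale: "T \<in> V \<Longrightarrow> adj (opscale c T) = opscale (cnj c) (adj T)"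
  by (rule adj_unique) (simp add: opscale_def cinner_cscale_left cinner_cscale_right V_adj1)

lemma adj_zop: "adj zop = zop"
  by (rule adj_unique) (simp add: zop_def)

lemma adj_sum_V:
  assumes "finite A" "\<And>i. i \<in> A \<Longrightarrow> f i \<in> V"
  shows "adj (\<lambda>v. \<Sum>i\<in>A. cscale (c i) (f i v)) = (\<lambda>v. \<Sum>i\<in>A. cscale (cnj (c i)) (adj (f i) v))"
  by (rule adj_unique) (simp add: cinner_sum_left cinner_sum_right cinner_cscale_left
      cinner_cscale_right V_adj1 assms)

lemma sum_V:
  assumes "finite A" "\<And>i. i \<in> A \<Longrightarrow> f i \<in> V"
  shows "(\<lambda>v. \<Sum>i\<in>A. f i v) \<in> V"
  using assms
proof (induction A rule: finite_induct)
  case empty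
  then show ?case using zop_V by (simp add: zop_def)
next
  case (insert x F)
  have "(\<lambda>v. \<Sum>i\<in>insert x F. f i v) = opadd (f x) (\<lambda>v. \<Sum>i\<in>F. f i v)"
    using insert by (simp add: opadd_def)
  then show ?case using insert opadd_V by simp
qed

lemma sum_scale_V:
  assumes "finite A" "\<And>i. i \<in> A \<Longrightarrow> f i \<in> V"
  shows "(\<lambda>v. \<Sum>i\<in>A. cscale (c i) (f i v)) \<in> V"
proof -
  have "(\<lambda>v. \<Sum>i\<in>A. cscale (c i) (f i v)) = (\<lambda>v. \<Sum>i\<in>A. opscale (c i) (f i) v)"
    by (simp add: opscale_def)
  also have "\<dots> \<in> V" using assms opscale_V by (intro sum_V) auto
  finally show ?thesis .
qed

lemma p_adj: "adj p = p" using proj by (simp add: is_projection_def)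
lemma p_idem: "p (p x) = p x"
  using proj unfolding is_projection_def by (metis comp_apply)
lemma p_sa: "cinner (p x) y = cinner x (p y)" using V_adj1[OF pV] p_adj by simp

lemma q_V: "(\<lambda>x. x - p x) \<in> V"
proof -
  have "(\<lambda>x. x - p x) = opadd id (opscale (-1) p)"
    by (rule ext) (simp add: opadd_def opscale_def)
  then show ?thesis using opadd_V opscale_V id_V pV by simp
qed

lemma Pd_V: "Pd p n r \<in> V" using pV q_V by (simp add: Pd_def)

lemma Pd_sa: "cinner (Pd p n r x) y = cinner x (Pd p n r y)"
  by (simp add: Pd_def p_sa cinner_diff_left cinner_diff_right)

lemma Pd_idem: "Pd p n r (Pd p n r x) = Pd p n r x"
  using V_diff[OF pV] by (simp add: Pd_def p_idem)

lemma Pd_adj: "adj (Pd p n r) = Pd p n r"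
  by (rule adj_unique) (simp add: Pd_sa)

lemma Pd_add: "Pd p n r (x + y) = Pd p n r x + Pd p n r y" using V_add[OF Pd_V] .
lemma Pd_scale: "Pd p n r (cscale c x) = cscale c (Pd p n r x)" using V_scale[OF Pd_V] .
lemma Pd_zero: "Pd p n r 0 = 0" using V_zero[OF Pd_V] .

lemma Pd_self: "cinner (Pd p n r (Pd p n r (Pd p n r x))) x = cinner (Pd p n r x) (Pd p n r x)"
  by (simp add: Pd_idem Pd_sa)

lemma opmats_entry: "x \<in> opmats N V \<Longrightarrow> i < N \<Longrightarrow> j < N \<Longrightarrow> x i j \<in> V"
  by (simp add: opmats_def)
lemma opmats_out: "x \<in> opmats N V \<Longrightarrow> \<not> (i < N \<and> j < N) \<Longrightarrow> x i j = zop"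
  by (simp add: opmats_def)
lemma opmats_zero: "(\<lambda>i j. zop) \<in> opmats N V"
  using zop_V by (simp add: opmats_def)
lemma opmats_add: "x \<in> opmats N V \<Longrightarrow> y \<in> opmats N V \<Longrightarrow> opmat_add N x y \<in> opmats N V"
  by (simp add: opmats_def opmat_add_def opadd_V)
lemma opmats_scale: "x \<in> opmats N V \<Longrightarrow> opmat_scale N c x \<in> opmats N V"
  by (simp add: opmats_def opmat_scale_def opscale_V)
lemma opmats_star: "x \<in> opmats N V \<Longrightarrow> opmat_star N x \<in> opmats N V"
  by (simp add: opmats_def opmat_star_def adj_V)

lemma opmats_eqI:
  assumes "x \<in> opmats N V" "y \<in> opmats N V"
    and "\<And>i j v. i < N \<Longrightarrow> j < N \<Longrightarrow> x i j v = y i j v"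
  shows "x = y"
proof (intro ext)
  fix i j v
  show "x i j v = y i j v"
    using assms by (cases "i < N \<and> j < N") (auto simp: opmats_def)
qed

lemma opmat_add_apply: "i < N \<Longrightarrow> j < N \<Longrightarrow> opmat_add N x y i j v = x i j v + y i j v"
  by (simp add: opmat_add_def opadd_def)
lemma opmat_scale_apply: "i < N \<Longrightarrow> j < N \<Longrightarrow> opmat_scale N c x i j v = cscale c (x i j v)"
  by (simp add: opmat_scale_def opscale_def)
lemma opmat_star_apply: "i < N \<Longrightarrow> j < N \<Longrightarrow> opmat_star N x i j = adj (x j i)"
  by (simp add: opmat_star_def)

lemma pq_diag_Pd: "pq_diag n p = (\<lambda>i j. if i < 2*n \<and> j < 2*n \<and> i = j then Pd p n i else zop)"
  by (simp add: pq_diag_def Pd_def fun_eq_iff)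

lemma pq_diag_mult:
  assumes x: "x \<in> opmats (2*n) V" and r: "r < 2*n" and s: "s < 2*n"
  shows "opmat_mult (2*n) (pq_diag n p) (opmat_mult (2*n) x (pq_diag n p)) r s
       = (\<lambda>v. Pd p n r (x r s (Pd p n s v)))"
proof (rule ext)
  fix v
  have inner: "opmat_mult (2*n) x (pq_diag n p) i s = (\<lambda>w. x i s (Pd p n s w))" if i: "i < 2*n" for i
  proof (rule ext)
    fix w
    have "opmat_mult (2*n) x (pq_diag n p) i s w = (\<Sum>j<2*n. x i j (pq_diag n p j s w))"
      using i s by (simp add: opmat_mult_def)
    also have "\<dots> = (\<Sum>j<2*n. if j = s then x i s (Pd p n s w) else 0)"
      using i s by (intro sum.cong refl)
        (auto simp: pq_diag_Pd zop_def V_zero[OF opmats_entry[OF x]])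
    also have "\<dots> = x i s (Pd p n s w)" using s by simp
    finally show "opmat_mult (2*n) x (pq_diag n p) i s w = x i s (Pd p n s w)" .
  qed
  have "opmat_mult (2*n) (pq_diag n p) (opmat_mult (2*n) x (pq_diag n p)) r s v
      = (\<Sum>j<2*n. pq_diag n p r j (opmat_mult (2*n) x (pq_diag n p) j s v))"
    using r s by (simp add: opmat_mult_def)
  also have "\<dots> = (\<Sum>j<2*n. if j = r then Pd p n r (x r s (Pd p n s v)) else 0)"
  proof (intro sum.cong refl)
    fix j assume j: "j \<in> {..<2*n}"
    show "pq_diag n p r j (opmat_mult (2*n) x (pq_diag n p) j s v) = (if j = r then Pd p n r (x r s (Pd p n s v)) else 0)"
    proof (cases "j = r")
      case True
      then show ?thesis using inner[OF r] r by (simp add: pq_diag_Pd)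
    next
      case False
      then show ?thesis by (simp add: pq_diag_Pd zop_def)
    qed
  qed
  also have "\<dots> = Pd p n r (x r s (Pd p n s v))" using r by simp
  finally show "opmat_mult (2*n) (pq_diag n p) (opmat_mult (2*n) x (pq_diag n p)) r s v
      = Pd p n r (x r s (Pd p n s v))" .
qed

lemma Ccone_char:
  "Ccone V p n = {x \<in> opmats (2*n) V. x = opmat_star (2*n) x \<and>
      (\<forall>\<xi>. Im (posform (2*n) (Pd p n) x \<xi>) = 0 \<and> 0 \<le> Re (posform (2*n) (Pd p n) x \<xi>))}"
proof -
  have eq: "(\<Sum>i<2*n. cinner (\<Sum>j<2*n. opmat_mult (2*n) (pq_diag n p) (opmat_mult (2*n) x (pq_diag n p)) i j (\<xi> j)) (\<xi> i))
      = posform (2*n) (Pd p n) x \<xi>" if x: "x \<in> opmats (2*n) V" for x \<xi>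
    unfolding posform_def cinner_sum_left
    by (intro sum.cong refl) (simp add: pq_diag_mult[OF x])
  have eq2: "opmat_pos (2*n) (opmat_mult (2*n) (pq_diag n p) (opmat_mult (2*n) x (pq_diag n p)))
     = (\<forall>\<xi>. Im (posform (2*n) (Pd p n) x \<xi>) = 0 \<and> 0 \<le> Re (posform (2*n) (Pd p n) x \<xi>))"
    if x: "x \<in> opmats (2*n) V" for x
    unfolding opmat_pos_def Let_def by (simp only: eq[OF x])
  show ?thesis unfolding Ccone_def using eq2 by blast
qed

lemma posform_add:
  assumes "x \<in> opmats N V" "y \<in> opmats N V" "\<And>r. P r \<in> V"
  shows "posform N P (opmat_add N x y) \<xi> = posform N P x \<xi> + posform N P y \<xi>"
  unfolding posform_def
  by (simp add: opmat_add_apply V_add assms cinner_add_left sum.distrib)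

lemma posform_scale:
  assumes "x \<in> opmats N V" "\<And>r. P r \<in> V"
  shows "posform N P (opmat_scale N c x) \<xi> = c * posform N P x \<xi>"
  unfolding posform_def
  by (simp add: opmat_scale_apply V_scale assms cinner_cscale_left sum_distrib_left)

lemma posform_cong:
  assumes "\<And>r s v. r < N \<Longrightarrow> s < N \<Longrightarrow> P r (x r s (P s v)) = P r (y r s (P s v))"
  shows "posform N P x \<xi> = posform N P y \<xi>"
  unfolding posform_def using assms by (intro sum.cong refl) auto

lemma posform_zero_entries:
  assumes x: "x \<in> opmats N V" and P: "\<And>r. P r \<in> V"
    and z: "\<And>\<xi>. posform N P x \<xi> = 0" and rs: "r < N" "s < N"
  shows "P r (x r s (P s v)) = 0"
proof -
  define F where "F = (\<lambda>r s v. P r (x r s (P s v)))"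
  have "F r s v = 0"
  proof (rule form_zero[where N = N and F = F])
    show "F r s (a + b) = F r s a + F r s b" if "r < N" "s < N" for r s a b
      unfolding F_def using that by (simp add: V_add P opmats_entry[OF x])
    show "F r s (cscale c a) = cscale c (F r s a)" if "r < N" "s < N" for r s c a
      unfolding F_def using that by (simp add: V_scale P opmats_entry[OF x])
    show "(\<Sum>r<N. \<Sum>s<N. cinner (F r s (\<xi> s)) (\<xi> r)) = 0" for \<xi>
      using z[of \<xi>] unfolding F_def posform_def .
  qed (use rs in auto)
  then show ?thesis unfolding F_def .
qed

end

lemma cinner_ext: "(\<And>u. cinner w u = cinner w' u) \<Longrightarrow> w = (w'::'a::complex_inner_space)"
proof -
  assume h: "\<And>u. cinner w u = cinner w' u"
  have "cinner (w - w') (w - w') = 0" using h[of "w - w'"] by (simp add: cinner_diff_left)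
  then show ?thesis by (simp add: cinner_self_eq_zero_iff)
qed

lemma vec_decomp:
  fixes u w :: "'a::complex_inner_space"
  shows "cscale (1/2) (u + w) + cscale (-\<i>/2) (cscale \<i> (u + cscale (-1) w)) = u"
proof -
  have a: "cscale (-\<i>/2) (cscale \<i> (u + cscale (-1) w)) = cscale (1/2) u + cscale (-1/2) w"
    by (simp add: cs.scale_right_distrib cs.scale_right_diff_distrib cscale_cscale)
  have "cscale (1/2) (u + w) + cscale (-\<i>/2) (cscale \<i> (u + cscale (-1) w))
      = (cscale (1/2) u + cscale (1/2) u) + (cscale (1/2) w + cscale (-1/2) w)"
    unfolding a by (simp add: cs.scale_right_distrib cs.scale_right_diff_distrib algebra_simps)
  also have "\<dots> = u"
    unfolding cs.scale_left_distrib[symmetric] by simp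
  finally show ?thesis .
qed

lemma vec_decomp2:
  fixes u w :: "'a::complex_inner_space"
  shows "cscale (1/2) (u + w) + cscale (1/2) (u - w) = u"
  using vec_decomp[of u w] by (simp add: cs.scale_right_distrib cs.scale_right_diff_distrib cscale_cscale)

lemma vec_herm_k:
  fixes a b :: "'a::complex_inner_space"
  shows "cscale (cnj \<i>) (a + cscale (cnj (-1)) b) = cscale \<i> (b + cscale (-1) a)"
  by (simp add: cs.scale_right_distrib cscale_cscale algebra_simps)

context qsetting
begin

abbreviation "M2 \<equiv> opmats 2 V"
abbreviation "J \<equiv> Jpq V p"
abbreviation "pd \<equiv> Pd p 1"
abbreviation "cls \<equiv> coset (Jpq V p)"

definition Kset :: "'h opmat set" where
  "Kset = {x \<in> M2. \<forall>a<2. \<forall>b<2. \<forall>v. pd a (x a b (pd b v)) = 0}"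

lemma star_add: "opmat_star N (opmat_add N x y) = opmat_add N (opmat_star N x) (opmat_star N y)"
  if "x \<in> opmats N V" "y \<in> opmats N V"
  using that by (intro ext) (simp add: opmat_star_def opmat_add_def adj_opadd opmats_entry adj_zop)

lemma star_scale: "opmat_star N (opmat_scale N c x) = opmat_scale N (cnj c) (opmat_star N x)"
  if "x \<in> opmats N V"
  using that by (intro ext) (simp add: opmat_star_def opmat_scale_def adj_opscale opmats_entry adj_zop)

lemma star_star: "opmat_star N (opmat_star N x) = x" if "x \<in> opmats N V"
  using that by (intro ext) (auto simp: opmat_star_def V_adj_adj opmats_entry adj_zop opmats_out)

lemma opmat_add_comm: "opmat_add N x y = opmat_add N y x"
  by (intro ext) (simp add: opmat_add_def opadd_def add.commute)

lemma Kset_add: "x \<in> Kset \<Longrightarrow> y \<in> Kset \<Longrightarrow> opmat_add 2 x y \<in> Kset"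
  unfolding Kset_def by (auto simp: opmats_add opmat_add_apply Pd_add)

lemma Kset_scale: "x \<in> Kset \<Longrightarrow> opmat_scale 2 c x \<in> Kset"
  unfolding Kset_def by (auto simp: opmats_scale opmat_scale_apply Pd_scale)

lemma Kset_star: "x \<in> Kset \<Longrightarrow> opmat_star 2 x \<in> Kset"
proof -
  assume x: "x \<in> Kset"
  have xm: "x \<in> M2" using x by (simp add: Kset_def)
  have "pd a (adj (x b a) (pd b v)) = 0" if ab: "a < 2" "b < 2" for a b v
  proof (rule cinner_ext)
    fix u
    have "cinner (pd a (adj (x b a) (pd b v))) u = cinner (adj (x b a) (pd b v)) (pd a u)"
      by (simp add: Pd_sa)
    also have "\<dots> = cinner (pd b v) (x b a (pd a u))"
      using V_adj2[OF opmats_entry[OF xm ab(2) ab(1)], symmetric] by simp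
    also have "\<dots> = cinner v (pd b (x b a (pd a u)))" by (simp add: Pd_sa)
    also have "\<dots> = 0" using x ab by (simp add: Kset_def)
    finally show "cinner (pd a (adj (x b a) (pd b v))) u = cinner 0 u" by simp
  qed
  then show ?thesis using x unfolding Kset_def by (auto simp: opmats_star opmat_star_apply)
qed

lemma posform_Kset: "x \<in> Kset \<Longrightarrow> posform 2 pd x \<xi> = 0"
  unfolding posform_def Kset_def by simp

lemma herm_Kset_J:
  assumes x: "x \<in> Kset" and h: "x = opmat_star 2 x"
  shows "x \<in> J"
proof -
  have xm: "x \<in> M2" using x by (simp add: Kset_def)
  have "x \<in> Ccone V p 1" unfolding Ccone_char using xm h posform_Kset[OF x] by simp
  moreover have "opmat_scale 2 (-1) x \<in> Ccone V p 1"
  proof -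
    have "opmat_star 2 (opmat_scale 2 (-1) x) = opmat_scale 2 (-1) x"
      using star_scale[OF xm, of "-1"] h by simp
    then show ?thesis unfolding Ccone_char
      using opmats_scale[OF xm] posform_Kset[OF Kset_scale[OF x]] by simp
  qed
  ultimately show ?thesis unfolding Jpq_def by (intro opmat_span.span_base) simp
qed

lemma J_sub_K: "x \<in> J \<Longrightarrow> x \<in> Kset"
  unfolding Jpq_def
proof (induction rule: opmat_span.induct)
  case span_zero
  have "(\<lambda>i j. zop) \<in> M2" by (rule opmats_zero)
  then show ?case unfolding Kset_def by (simp add: zop_def Pd_zero)
next
  case (span_base x)
  then have c1: "x \<in> Ccone V p 1" and c2: "opmat_scale 2 (-1) x \<in> Ccone V p 1" by auto
  have xm: "x \<in> M2" using c1 unfolding Ccone_char by simp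
  have z: "posform 2 pd x \<xi> = 0" for \<xi>
  proof -
    have "Im (posform 2 pd x \<xi>) = 0" "0 \<le> Re (posform 2 pd x \<xi>)" using c1 unfolding Ccone_char by auto
    moreover have "0 \<le> Re (posform 2 pd (opmat_scale 2 (-1) x) \<xi>)" using c2 unfolding Ccone_char by auto
    then have "0 \<le> - Re (posform 2 pd x \<xi>)" using posform_scale[OF xm Pd_V, where c = "-1"] by simp
    ultimately show ?thesis by (simp add: complex_eq_iff)
  qed
  show ?case unfolding Kset_def
    using xm posform_zero_entries[OF xm Pd_V z] by auto
next
  case (span_add x y)
  then show ?case by (blast intro: Kset_add)
next
  case (span_scale x c)
  then show ?case by (blast intro: Kset_scale)
qed

lemma K_sub_J:
  assumes x: "x \<in> Kset"
  shows "x \<in> J"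
proof -
  have xm: "x \<in> M2" using x by (simp add: Kset_def)
  have xsm: "opmat_star 2 x \<in> M2" using xm by (rule opmats_star)
  define h where "h = opmat_add 2 x (opmat_star 2 x)"
  define k where "k = opmat_scale 2 \<i> (opmat_add 2 x (opmat_scale 2 (-1) (opmat_star 2 x)))"
  have hK: "h \<in> Kset" unfolding h_def using x by (intro Kset_add Kset_star)
  have kK: "k \<in> Kset" unfolding k_def using x by (intro Kset_add Kset_star Kset_scale)
  have hh: "h = opmat_star 2 h" unfolding h_def
    using star_add[OF xm xsm] star_star[OF xm] opmat_add_comm by metis
  have km: "k \<in> M2" using kK by (simp add: Kset_def)
  have kh: "k = opmat_star 2 k"
  proof (rule opmats_eqI[OF km opmats_star[OF km]])
    fix i j :: nat and v assume ij: "i < 2" "j < 2"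
    have kij: "k a b = opscale \<i> (opadd (x a b) (opscale (-1) (adj (x b a))))" if "a < 2" "b < 2" for a b
      using that by (simp add: k_def opmat_scale_def opmat_add_def opmat_star_def)
    have V1: "x i j \<in> V" "x j i \<in> V" using ij xm by (auto simp: opmats_entry)
    have "opmat_star 2 k i j = adj (k j i)" using ij by (simp add: opmat_star_apply)
    also have "\<dots> = opscale (cnj \<i>) (opadd (adj (x j i)) (opscale (cnj (-1)) (x i j)))"
      using ij V1 by (simp add: kij adj_opscale adj_opadd opadd_V opscale_V adj_V V_adj_adj)
    finally have "opmat_star 2 k i j v = opscale (cnj \<i>) (opadd (adj (x j i)) (opscale (cnj (-1)) (x i j))) v"
      by simp
    also have "\<dots> = k i j v" using ij
      by (simp only: kij opscale_def opadd_def vec_herm_k)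
    finally show "k i j v = opmat_star 2 k i j v" by simp
  qed
  have dec: "x = opmat_add 2 (opmat_scale 2 (1/2) h) (opmat_scale 2 (-\<i>/2) k)"
  proof (rule opmats_eqI[OF xm])
    show "opmat_add 2 (opmat_scale 2 (1/2) h) (opmat_scale 2 (-\<i>/2) k) \<in> M2"
      using hK km by (intro opmats_add opmats_scale) (auto simp: Kset_def)
    fix i j :: nat and v assume ij: "i < 2" "j < 2"
    show "x i j v = opmat_add 2 (opmat_scale 2 (1/2) h) (opmat_scale 2 (-\<i>/2) k) i j v"
      using ij by (simp add: h_def k_def opmat_add_apply opmat_scale_apply vec_decomp2)
  qed
  have "h \<in> J" using herm_Kset_J[OF hK hh] .
  moreover have "k \<in> J" using herm_Kset_J[OF kK kh] .
  ultimately have "opmat_add 2 (opmat_scale 2 (1/2) h) (opmat_scale 2 (-\<i>/2) k) \<in> J"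
    unfolding Jpq_def by (intro opmat_span.span_add opmat_span.span_scale)
  then show ?thesis using dec by simp
qed

lemma J_eq_K: "J = Kset" using J_sub_K K_sub_J by blast

end

context qsetting
begin

abbreviation "Q \<equiv> quotient_osys V p"
abbreviation "zero2 \<equiv> (\<lambda>i j. zop) :: 'h opmat"

lemma J_M2: "x \<in> J \<Longrightarrow> x \<in> M2" using J_eq_K by (simp add: Kset_def)
lemma J_zero: "zero2 \<in> J" unfolding Jpq_def by (rule opmat_span.span_zero)
lemma J_add: "x \<in> J \<Longrightarrow> y \<in> J \<Longrightarrow> opmat_add 2 x y \<in> J"
  unfolding Jpq_def by (rule opmat_span.span_add)
lemma J_scale: "x \<in> J \<Longrightarrow> opmat_scale 2 c x \<in> J"
  unfolding Jpq_def by (rule opmat_span.span_scale)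

lemma cscale_m1: "cscale (-1) w = - w" by (simp add: cs.scale_minus_left)

lemma add_zero2: "x \<in> M2 \<Longrightarrow> opmat_add 2 x zero2 = x"
  by (rule opmats_eqI[OF opmats_add[OF _ opmats_zero]]) (auto simp: opmat_add_apply zop_def)

lemma self_in_cls: "x \<in> M2 \<Longrightarrow> x \<in> cls x"
  unfolding coset_def using J_zero add_zero2 by force

lemma comp_add: "a < 2 \<Longrightarrow> b < 2 \<Longrightarrow> Pd p n a (opmat_add 2 x y a b (Pd p n b v)) = Pd p n a (x a b (Pd p n b v)) + Pd p n a (y a b (Pd p n b v))"
  by (simp add: opmat_add_apply Pd_add)
lemma comp_scale: "a < 2 \<Longrightarrow> b < 2 \<Longrightarrow> Pd p n a (opmat_scale 2 c x a b (Pd p n b v)) = cscale c (Pd p n a (x a b (Pd p n b v)))"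
  by (simp add: opmat_scale_apply Pd_scale)

lemma Kset_diff:
  assumes "x \<in> M2" "y \<in> M2"
  shows "opmat_add 2 x (opmat_scale 2 (-1) y) \<in> Kset \<longleftrightarrow>
     (\<forall>a<2. \<forall>b<2. \<forall>v. pd a (x a b (pd b v)) = pd a (y a b (pd b v)))"
proof -
  have m: "opmat_add 2 x (opmat_scale 2 (-1) y) \<in> M2" using assms by (intro opmats_add opmats_scale)
  have "pd a (opmat_add 2 x (opmat_scale 2 (-1) y) a b (pd b v)) = pd a (x a b (pd b v)) - pd a (y a b (pd b v))"
    if "a < 2" "b < 2" for a b v
    using that by (simp add: comp_add comp_scale cscale_m1)
  then show ?thesis using m unfolding Kset_def by auto
qed

lemma cls_eq_iff:
  assumes x: "x \<in> M2" and y: "y \<in> M2"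
  shows "cls x = cls y \<longleftrightarrow> opmat_add 2 x (opmat_scale 2 (-1) y) \<in> J"
proof
  assume "cls x = cls y"
  then have "x \<in> cls y" using self_in_cls[OF x] by simp
  then obtain j where j: "j \<in> J" "x = opmat_add 2 y j" unfolding coset_def by auto
  have "opmat_add 2 x (opmat_scale 2 (-1) y) = j"
  proof (rule opmats_eqI)
    show "opmat_add 2 x (opmat_scale 2 (-1) y) \<in> M2" using x y by (intro opmats_add opmats_scale)
    show "j \<in> M2" using j J_M2 by simp
    fix a b :: nat and v assume "a < 2" "b < 2"
    then show "opmat_add 2 x (opmat_scale 2 (-1) y) a b v = j a b v"
      using j by (simp add: opmat_add_apply opmat_scale_apply cscale_m1)
  qed
  then show "opmat_add 2 x (opmat_scale 2 (-1) y) \<in> J" using j by simp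
next
  assume d: "opmat_add 2 x (opmat_scale 2 (-1) y) \<in> J"
  define d where "d = opmat_add 2 x (opmat_scale 2 (-1) y)"
  have dJ: "d \<in> J" using d d_def by simp
  have dm: "d \<in> M2" using dJ J_M2 by simp
  show "cls x = cls y"
  proof
    show "cls x \<subseteq> cls y"
    proof
      fix z assume "z \<in> cls x"
      then obtain j where j: "j \<in> J" "z = opmat_add 2 x j" unfolding coset_def by auto
      have jm: "j \<in> M2" using j J_M2 by simp
      have "z = opmat_add 2 y (opmat_add 2 d j)"
      proof (rule opmats_eqI)
        show "z \<in> M2" using j x jm by (simp add: opmats_add)
        show "opmat_add 2 y (opmat_add 2 d j) \<in> M2" using y dm jm by (simp add: opmats_add)
        fix a b :: nat and v assume "a < 2" "b < 2"
        then show "z a b v = opmat_add 2 y (opmat_add 2 d j) a b v"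
          using j by (simp add: d_def opmat_add_apply opmat_scale_apply cscale_m1)
      qed
      moreover have "opmat_add 2 d j \<in> J" using dJ j by (simp add: J_add)
      ultimately show "z \<in> cls y" unfolding coset_def by auto
    qed
  next
    show "cls y \<subseteq> cls x"
    proof
      fix z assume "z \<in> cls y"
      then obtain j where j: "j \<in> J" "z = opmat_add 2 y j" unfolding coset_def by auto
      have jm: "j \<in> M2" using j J_M2 by simp
      have "z = opmat_add 2 x (opmat_add 2 (opmat_scale 2 (-1) d) j)"
      proof (rule opmats_eqI)
        show "z \<in> M2" using j y jm by (simp add: opmats_add)
        show "opmat_add 2 x (opmat_add 2 (opmat_scale 2 (-1) d) j) \<in> M2"
          using x dm jm by (simp add: opmats_add opmats_scale)
        fix a b :: nat and v assume "a < 2" "b < 2"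
        then show "z a b v = opmat_add 2 x (opmat_add 2 (opmat_scale 2 (-1) d) j) a b v"
          using j by (simp add: d_def opmat_add_apply opmat_scale_apply cscale_m1)
      qed
      moreover have "opmat_add 2 (opmat_scale 2 (-1) d) j \<in> J" using dJ j by (simp add: J_add J_scale)
      ultimately show "z \<in> cls x" unfolding coset_def by auto
    qed
  qed
qed

lemma cls_comp:
  assumes "x \<in> M2" "y \<in> M2"
  shows "cls x = cls y \<longleftrightarrow> (\<forall>a<2. \<forall>b<2. \<forall>v. pd a (x a b (pd b v)) = pd a (y a b (pd b v)))"
  using cls_eq_iff[OF assms] Kset_diff[OF assms] J_eq_K by simp

lemma cls_compD:
  assumes "x \<in> M2" "y \<in> M2" "cls x = cls y" "a < 2" "b < 2"
  shows "pd a (x a b (pd b v)) = pd a (y a b (pd b v))"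
  using cls_comp[OF assms(1,2)] assms(3-5) by blast

lemma rep_cls:
  assumes x: "x \<in> M2"
  shows "rep (cls x) \<in> M2" "cls (rep (cls x)) = cls x"
proof -
  have "rep (cls x) \<in> cls x" unfolding rep_def using someI[of "\<lambda>y. y \<in> cls x" x] self_in_cls[OF x] by blast
  then obtain j where j: "j \<in> J" "rep (cls x) = opmat_add 2 x j" unfolding coset_def by auto
  have jm: "j \<in> M2" using j J_M2 by simp
  show rm: "rep (cls x) \<in> M2" using j x jm by (simp add: opmats_add)
  have jK: "j \<in> Kset" using j J_eq_K by simp
  show "cls (rep (cls x)) = cls x"
    unfolding cls_comp[OF rm x] using j jK by (simp add: comp_add Kset_def)
qed

lemma Q_carrier: "carrier Q = cls ` M2" by (simp add: quotient_osys_def Let_def)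
lemma Q_zero: "zero Q = cls zero2" by (simp add: quotient_osys_def Let_def)
lemma Q_add: "add Q A B = cls (opmat_add 2 (rep A) (rep B))" by (simp add: quotient_osys_def Let_def)
lemma Q_scale: "scale Q c A = cls (opmat_scale 2 c (rep A))" by (simp add: quotient_osys_def Let_def)
lemma Q_star: "star Q A = cls (opmat_star 2 (rep A))" by (simp add: quotient_osys_def Let_def)
lemma Q_unit: "unit Q = cls (pq_diag 1 p)" by (simp add: quotient_osys_def Let_def)
lemma Q_cone: "cone Q n = {(\<lambda>i j. if i < n \<and> j < n then cls (y i j) else cls zero2) | y.
                     (\<forall>i j. (i < n \<and> j < n \<longrightarrow> y i j \<in> M2) \<and>
                            (\<not> (i < n \<and> j < n) \<longrightarrow> y i j = zero2))
                     \<and> shuffle n y \<in> Ccone V p n}"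
  by (simp add: quotient_osys_def Let_def)

lemma cls_add: assumes x: "x \<in> M2" and y: "y \<in> M2"
  shows "add Q (cls x) (cls y) = cls (opmat_add 2 x y)"
proof -
  note rx = rep_cls[OF x] and ry = rep_cls[OF y]
  show ?thesis unfolding Q_add cls_comp[OF opmats_add[OF rx(1) ry(1)] opmats_add[OF x y]]
    using cls_compD[OF rx(1) x rx(2)] cls_compD[OF ry(1) y ry(2)] by (simp add: comp_add)
qed

lemma cls_scale: assumes x: "x \<in> M2"
  shows "scale Q c (cls x) = cls (opmat_scale 2 c x)"
proof -
  note rx = rep_cls[OF x]
  show ?thesis unfolding Q_scale cls_comp[OF opmats_scale[OF rx(1)] opmats_scale[OF x]]
    using cls_compD[OF rx(1) x rx(2)] by (simp add: comp_scale)
qed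

lemma comp_star_inner:
  assumes z: "z \<in> M2" and ab: "a < 2" "b < 2"
  shows "cinner (Pd p n a (opmat_star 2 z a b (Pd p n b v))) u = cinner v (Pd p n b (z b a (Pd p n a u)))"
proof -
  have "cinner (Pd p n a (opmat_star 2 z a b (Pd p n b v))) u = cinner (adj (z b a) (Pd p n b v)) (Pd p n a u)"
    using ab by (simp add: opmat_star_apply Pd_sa)
  also have "\<dots> = cinner (Pd p n b v) (z b a (Pd p n a u))"
    using V_adj2[OF opmats_entry[OF z ab(2) ab(1)], symmetric] by simp
  also have "\<dots> = cinner v (Pd p n b (z b a (Pd p n a u)))" by (simp add: Pd_sa)
  finally show ?thesis .
qed

lemma cls_star_eq:
  assumes x: "x \<in> M2" and y: "y \<in> M2" and e: "cls x = cls y"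
  shows "cls (opmat_star 2 x) = cls (opmat_star 2 y)"
  unfolding cls_comp[OF opmats_star[OF x] opmats_star[OF y]]
proof (intro allI impI)
  fix a b :: nat and v assume ab: "a < 2" "b < 2"
  show "pd a (opmat_star 2 x a b (pd b v)) = pd a (opmat_star 2 y a b (pd b v))"
  proof (rule cinner_ext)
    fix u
    show "cinner (pd a (opmat_star 2 x a b (pd b v))) u = cinner (pd a (opmat_star 2 y a b (pd b v))) u"
      unfolding comp_star_inner[OF x ab] comp_star_inner[OF y ab]
      using cls_compD[OF x y e ab(2) ab(1)] by simp
  qed
qed

lemma cls_star: assumes x: "x \<in> M2"
  shows "star Q (cls x) = cls (opmat_star 2 x)"
  unfolding Q_star using cls_star_eq[OF rep_cls(1)[OF x] x rep_cls(2)[OF x]] .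

lemma carrierE: "A \<in> carrier Q \<Longrightarrow> (\<And>x. x \<in> M2 \<Longrightarrow> A = cls x \<Longrightarrow> P) \<Longrightarrow> P"
  unfolding Q_carrier by blast

lemma cls_in_carrier: "x \<in> M2 \<Longrightarrow> cls x \<in> carrier Q"
  unfolding Q_carrier by blast

lemma opmat_add_assoc: "opmat_add N (opmat_add N x y) z = opmat_add N x (opmat_add N y z)"
  by (intro ext) (simp add: opmat_add_def opadd_def add.assoc)

lemma Q_vs: "complex_vector_space Q"
  unfolding complex_vector_space_def
proof (intro conjI ballI allI)
  show "zero Q \<in> carrier Q" unfolding Q_zero using opmats_zero by (rule cls_in_carrier)
next
  fix A B assume "A \<in> carrier Q" "B \<in> carrier Q"
  then show "add Q A B \<in> carrier Q"
    by (auto elim!: carrierE simp: cls_add opmats_add cls_in_carrier)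
next
  fix c A assume "A \<in> carrier Q"
  then show "scale Q c A \<in> carrier Q"
    by (auto elim!: carrierE simp: cls_scale opmats_scale cls_in_carrier)
next
  fix A B C assume "A \<in> carrier Q" "B \<in> carrier Q" "C \<in> carrier Q"
  then show "add Q (add Q A B) C = add Q A (add Q B C)"
    by (auto elim!: carrierE simp: cls_add opmats_add opmat_add_assoc)
next
  fix A B assume "A \<in> carrier Q" "B \<in> carrier Q"
  then show "add Q A B = add Q B A"
    by (auto elim!: carrierE simp: cls_add opmat_add_comm)
next
  fix A assume "A \<in> carrier Q"
  then show "add Q (zero Q) A = A"
    by (auto elim!: carrierE simp: Q_zero cls_add opmats_zero opmat_add_comm add_zero2)
next
  fix A assume "A \<in> carrier Q"
  then obtain x where x: "x \<in> M2" "A = cls x" by (rule carrierE)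
  have "opmat_add 2 x (opmat_scale 2 (-1) x) = zero2"
    by (rule opmats_eqI[OF opmats_add[OF x(1) opmats_scale[OF x(1)]] opmats_zero])
      (auto simp: opmat_add_apply opmat_scale_apply cscale_m1 zop_def)
  then have "add Q A (cls (opmat_scale 2 (-1) x)) = zero Q"
    using x by (simp add: cls_add opmats_scale Q_zero)
  moreover have "cls (opmat_scale 2 (-1) x) \<in> carrier Q" using x by (simp add: cls_in_carrier opmats_scale)
  ultimately show "\<exists>B\<in>carrier Q. add Q A B = zero Q" by blast
next
  fix a A B assume AB: "A \<in> carrier Q" "B \<in> carrier Q"
  have d: "opmat_scale 2 a (opmat_add 2 x y) = opmat_add 2 (opmat_scale 2 a x) (opmat_scale 2 a y)" for x y
    by (intro ext) (simp add: opmat_scale_def opmat_add_def opscale_def opadd_def cs.scale_right_distrib)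
  show "scale Q a (add Q A B) = add Q (scale Q a A) (scale Q a B)"
    using AB by (auto elim!: carrierE simp: cls_add cls_scale opmats_add opmats_scale d)
next
  fix a b A assume AB: "A \<in> carrier Q"
  have d: "opmat_scale 2 (a + b) x = opmat_add 2 (opmat_scale 2 a x) (opmat_scale 2 b x)" for x
    by (intro ext) (simp add: opmat_scale_def opmat_add_def opscale_def opadd_def cs.scale_left_distrib)
  show "scale Q (a + b) A = add Q (scale Q a A) (scale Q b A)"
    using AB by (auto elim!: carrierE simp: cls_add cls_scale opmats_add opmats_scale d)
next
  fix a b A assume AB: "A \<in> carrier Q"
  have d: "opmat_scale 2 a (opmat_scale 2 b x) = opmat_scale 2 (a * b) x" for x
    by (intro ext) (simp add: opmat_scale_def opscale_def)
  show "scale Q a (scale Q b A) = scale Q (a * b) A"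
    using AB by (auto elim!: carrierE simp: cls_scale opmats_scale d)
next
  fix A assume AB: "A \<in> carrier Q"
  have d: "x \<in> M2 \<Longrightarrow> opmat_scale 2 1 x = x" for x
    by (rule opmats_eqI) (auto simp: opmats_scale opmat_scale_apply)
  show "scale Q 1 A = A"
    using AB by (auto elim!: carrierE simp: cls_scale d)
qed

lemma Q_svs: "star_vector_space Q"
  unfolding star_vector_space_def
proof (intro conjI ballI allI Q_vs)
  fix A assume "A \<in> carrier Q"
  then show "star Q A \<in> carrier Q"
    by (auto elim!: carrierE simp: cls_star opmats_star cls_in_carrier)
next
  fix A assume "A \<in> carrier Q"
  then show "star Q (star Q A) = A"
    by (auto elim!: carrierE simp: cls_star opmats_star star_star)
next
  fix A B assume "A \<in> carrier Q" "B \<in> carrier Q"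
  then show "star Q (add Q A B) = add Q (star Q A) (star Q B)"
    by (auto elim!: carrierE simp: cls_star cls_add opmats_star opmats_add star_add)
next
  fix c A assume "A \<in> carrier Q"
  then show "star Q (scale Q c A) = scale Q (cnj c) (star Q A)"
    by (auto elim!: carrierE simp: cls_star cls_scale opmats_star opmats_scale star_scale)
qed

end

lemma sum2: "(\<Sum>a<(2::nat). f a) = f 0 + f 1"
  by (simp add: numeral_2_eq_2)

lemma sum_2n: "(\<Sum>r<2*n. g r) = (\<Sum>a<2. \<Sum>i<n. g (a*n+i))" for n :: nat
proof -
  have L1: "(\<Sum>r<2*n. g r) = (\<Sum>r\<in>{0..<n}. g r) + (\<Sum>r\<in>{n..<2*n}. g r)"
    by (simp add: lessThan_atLeast0 sum.atLeastLessThan_concat)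
  have L2: "(\<Sum>r\<in>{n..<2*n}. g r) = (\<Sum>i\<in>{0..<n}. g (i + n))"
  proof -
    have e: "2*n = n + n" by simp
    show ?thesis unfolding e using sum.shift_bounds_nat_ivl[of g 0 n n] by simp
  qed
  have R: "(\<Sum>a<2. \<Sum>i<n. g (a*n+i)) = (\<Sum>i<n. g i) + (\<Sum>i<n. g (i + n))"
    by (simp add: sum2 add.commute)
  show ?thesis unfolding R L1 L2 by (simp add: lessThan_atLeast0)
qed

lemma div_mod_facts: "r < 2*n \<Longrightarrow> r mod n < n \<and> r div (n::nat) < 2"
proof -
  assume r: "r < 2*n"
  then have "n > 0" by simp
  then show ?thesis using r by (simp add: less_mult_imp_div_less mult.commute)
qed

lemma am_less: "i < n \<Longrightarrow> a < 2 \<Longrightarrow> a*n + i < 2*(n::nat)"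
proof -
  assume "i < n" "a < 2"
  then have "a = 0 \<or> a = 1" by auto
  then show ?thesis using \<open>i < n\<close> by auto
qed

lemma half_vec: "cscale (1/2) (u + u) = (u::'a::complex_inner_space)"
proof -
  have "cscale (1/2) (u + u) = cscale (1/2 + 1/2) u"
    by (simp only: cs.scale_right_distrib cs.scale_left_distrib)
  then show ?thesis by simp
qed

lemma am_div: "i < n \<Longrightarrow> (a*n + i) div n = (a::nat)" by simp
lemma am_mod: "i < n \<Longrightarrow> (a*n + i) mod n = (i::nat)" by simp

context qsetting
begin

definition Lset :: "nat \<Rightarrow> (nat \<Rightarrow> nat \<Rightarrow> 'h opmat) set" where
  "Lset n = {y. \<forall>i j. (i < n \<and> j < n \<longrightarrow> y i j \<in> M2) \<and> (\<not> (i < n \<and> j < n) \<longrightarrow> y i j = zero2)}"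
definition clsm :: "nat \<Rightarrow> (nat \<Rightarrow> nat \<Rightarrow> 'h opmat) \<Rightarrow> nat \<Rightarrow> nat \<Rightarrow> 'h opmat set" where
  "clsm n y = (\<lambda>i j. if i < n \<and> j < n then cls (y i j) else cls zero2)"
definition hermL :: "nat \<Rightarrow> (nat \<Rightarrow> nat \<Rightarrow> 'h opmat) \<Rightarrow> bool" where
  "hermL n y \<longleftrightarrow> (\<forall>i<n. \<forall>j<n. \<forall>a<2. \<forall>b<2. y i j a b = adj (y j i b a))"
definition posF :: "nat \<Rightarrow> (nat \<Rightarrow> nat \<Rightarrow> 'h opmat) \<Rightarrow> (nat \<Rightarrow> 'h) \<Rightarrow> complex" where
  "posF n y \<xi> = posform (2*n) (Pd p n) (shuffle n y) \<xi>"
definition ladd :: "nat \<Rightarrow> (nat \<Rightarrow> nat \<Rightarrow> 'h opmat) \<Rightarrow> (nat \<Rightarrow> nat \<Rightarrow> 'h opmat) \<Rightarrow> nat \<Rightarrow> nat \<Rightarrow> 'h opmat" where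
  "ladd n y w = (\<lambda>i j. if i < n \<and> j < n then opmat_add 2 (y i j) (w i j) else zero2)"
definition lscale :: "nat \<Rightarrow> complex \<Rightarrow> (nat \<Rightarrow> nat \<Rightarrow> 'h opmat) \<Rightarrow> nat \<Rightarrow> nat \<Rightarrow> 'h opmat" where
  "lscale n c y = (\<lambda>i j. if i < n \<and> j < n then opmat_scale 2 c (y i j) else zero2)"
definition Eh :: "nat \<Rightarrow> nat \<Rightarrow> nat \<Rightarrow> 'h opmat" where
  "Eh n = (\<lambda>i j. if i < n \<and> j < n \<and> i = j then pq_diag 1 p else zero2)"
definition Nrm :: "nat \<Rightarrow> (nat \<Rightarrow> 'h) \<Rightarrow> real" where
  "Nrm n \<xi> = (\<Sum>r<2*n. (cnorm (Pd p n r (\<xi> r)))\<^sup>2)"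

lemma Nrm_ge0: "Nrm n \<xi> \<ge> 0" unfolding Nrm_def by (intro sum_nonneg) simp

lemma LsetD: "y \<in> Lset n \<Longrightarrow> i < n \<Longrightarrow> j < n \<Longrightarrow> y i j \<in> M2" by (simp add: Lset_def)
lemma LsetD2: "y \<in> Lset n \<Longrightarrow> \<not> (i < n \<and> j < n) \<Longrightarrow> y i j = zero2" by (simp add: Lset_def)

lemma Pd_div: "r < 2*n \<Longrightarrow> Pd p n r = Pd p 1 (r div n)"
proof -
  assume r: "r < 2*n"
  then have n: "n > 0" by simp
  have "r < n \<longleftrightarrow> r div n < 1" using n by (simp add: div_eq_0_iff)
  then show ?thesis by (simp add: Pd_def)
qed

lemma shuffle_opmats:
  assumes y: "y \<in> Lset n"
  shows "shuffle n y \<in> opmats (2*n) V"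
proof -
  have A: "shuffle n y i j \<in> V" if ij: "i < 2*n" "j < 2*n" for i j
  proof -
    note di = div_mod_facts[OF ij(1)] and dj = div_mod_facts[OF ij(2)]
    show ?thesis using ij
      opmats_entry[OF LsetD[OF y conjunct1[OF di] conjunct1[OF dj]] conjunct2[OF di] conjunct2[OF dj]]
      by (simp add: shuffle_def)
  qed
  have B: "shuffle n y i j = zop" if "\<not> (i < 2*n \<and> j < 2*n)" for i j
    using that unfolding shuffle_def by auto
  show ?thesis unfolding opmats_def using A B by blast
qed

lemma shuffle_apply: "i < n \<Longrightarrow> j < n \<Longrightarrow> a < 2 \<Longrightarrow> b < 2 \<Longrightarrow> shuffle n y (a*n+i) (b*n+j) = y i j a b"
  unfolding shuffle_def using am_less[of i n a] am_less[of j n b] by simp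

lemma shuffle_herm_iff:
  assumes y: "y \<in> Lset n"
  shows "(shuffle n y = opmat_star (2*n) (shuffle n y)) \<longleftrightarrow> hermL n y"
proof
  assume h: "shuffle n y = opmat_star (2*n) (shuffle n y)"
  show "hermL n y" unfolding hermL_def
  proof (intro allI impI)
    fix i j a b :: nat assume ij: "i < n" "j < n" "a < 2" "b < 2"
    have "y i j a b = shuffle n y (a*n+i) (b*n+j)" using ij by (simp add: shuffle_apply)
    also have "\<dots> = opmat_star (2*n) (shuffle n y) (a*n+i) (b*n+j)" using h by simp
    also have "\<dots> = adj (shuffle n y (b*n+j) (a*n+i))" using ij am_less by (simp add: opmat_star_apply)
    also have "\<dots> = adj (y j i b a)" using ij by (simp add: shuffle_apply)
    finally show "y i j a b = adj (y j i b a)" .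
  qed
next
  assume h: "hermL n y"
  show "shuffle n y = opmat_star (2*n) (shuffle n y)"
  proof (rule ext, rule ext)
    fix r s
    show "shuffle n y r s = opmat_star (2*n) (shuffle n y) r s"
    proof (cases "r < 2*n \<and> s < 2*n")
      case True
      note dr = div_mod_facts[of r n] and ds = div_mod_facts[of s n]
      have e: "y (r mod n) (s mod n) (r div n) (s div n) = adj (y (s mod n) (r mod n) (s div n) (r div n))"
        using h dr ds True unfolding hermL_def by blast
      show ?thesis using True e by (simp add: shuffle_def opmat_star_def)
    next
      case False
      then show ?thesis by (auto simp: shuffle_def opmat_star_def)
    qed
  qed
qed

lemma Ccone_L:
  assumes y: "y \<in> Lset n"
  shows "shuffle n y \<in> Ccone V p n \<longleftrightarrow> hermL n y \<and> (\<forall>\<xi>. Im (posF n y \<xi>) = 0 \<and> 0 \<le> Re (posF n y \<xi>))"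
  unfolding Ccone_char posF_def using shuffle_opmats[OF y] shuffle_herm_iff[OF y] by auto

lemma posF_cong:
  assumes y: "y \<in> Lset n" and w: "w \<in> Lset n"
    and e: "\<And>i j. i < n \<Longrightarrow> j < n \<Longrightarrow> cls (y i j) = cls (w i j)"
  shows "posF n y \<xi> = posF n w \<xi>"
  unfolding posF_def
proof (rule posform_cong)
  fix r s v assume rs: "r < 2*n" "s < 2*n"
  note dr = div_mod_facts[OF rs(1)] and ds = div_mod_facts[OF rs(2)]
  show "Pd p n r (shuffle n y r s (Pd p n s v)) = Pd p n r (shuffle n w r s (Pd p n s v))"
  proof -
    have sy: "shuffle n y r s = y (r mod n) (s mod n) (r div n) (s div n)" using rs by (simp add: shuffle_def)
    have sw: "shuffle n w r s = w (r mod n) (s mod n) (r div n) (s div n)" using rs by (simp add: shuffle_def)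
    show ?thesis unfolding Pd_div[OF rs(1)] Pd_div[OF rs(2)] sy sw
      by (rule cls_compD[OF LsetD[OF y conjunct1[OF dr] conjunct1[OF ds]] LsetD[OF w conjunct1[OF dr] conjunct1[OF ds]]
            e[OF conjunct1[OF dr] conjunct1[OF ds]] conjunct2[OF dr] conjunct2[OF ds]])
  qed
qed

lemma Q_cone_L: "cone Q n = {clsm n y | y. y \<in> Lset n \<and> shuffle n y \<in> Ccone V p n}"
  unfolding Q_cone clsm_def Lset_def by simp

lemma cone_memI:
  assumes "y \<in> Lset n" "hermL n y" "\<And>\<xi>. Im (posF n y \<xi>) = 0" "\<And>\<xi>. 0 \<le> Re (posF n y \<xi>)"
  shows "clsm n y \<in> cone Q n"
  unfolding Q_cone_L using assms Ccone_L by blast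

lemma cone_memE:
  assumes "X \<in> cone Q n"
  obtains y where "y \<in> Lset n" "X = clsm n y" "hermL n y"
    "\<And>\<xi>. Im (posF n y \<xi>) = 0" "\<And>\<xi>. 0 \<le> Re (posF n y \<xi>)"
  using assms unfolding Q_cone_L using Ccone_L by blast

lemma clsm_eqD: "clsm n y = clsm n w \<Longrightarrow> i < n \<Longrightarrow> j < n \<Longrightarrow> cls (y i j) = cls (w i j)"
  unfolding clsm_def by (drule fun_cong[of _ _ i], drule fun_cong[of _ _ j]) simp

lemma cone_posF:
  assumes y: "y \<in> Lset n" and c: "clsm n y \<in> cone Q n"
  shows "Im (posF n y \<xi>) = 0 \<and> 0 \<le> Re (posF n y \<xi>)"
proof -
  obtain w where w: "w \<in> Lset n" "clsm n y = clsm n w"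
    "\<And>\<xi>. Im (posF n w \<xi>) = 0" "\<And>\<xi>. 0 \<le> Re (posF n w \<xi>)"
    using c by (rule cone_memE) blast
  have "posF n y \<xi> = posF n w \<xi>" using y w(1) clsm_eqD[OF w(2)] by (rule posF_cong)
  then show ?thesis using w by simp
qed

lemma pq1_M2: "pq_diag 1 p \<in> M2"
  unfolding pq_diag_Pd using Pd_V zop_V by (simp add: opmats_def)

lemma ladd_L: "y \<in> Lset n \<Longrightarrow> w \<in> Lset n \<Longrightarrow> ladd n y w \<in> Lset n"
  unfolding Lset_def ladd_def by (auto intro: opmats_add)
lemma lscale_L: "y \<in> Lset n \<Longrightarrow> lscale n c y \<in> Lset n"
  unfolding Lset_def lscale_def by (auto intro: opmats_scale)
lemma Eh_L: "Eh n \<in> Lset n"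
  unfolding Lset_def Eh_def using pq1_M2 opmats_zero by auto
lemma zeroL: "(\<lambda>i j. zero2) \<in> Lset n"
  unfolding Lset_def using opmats_zero by auto

lemma shuffle_ladd:
  assumes "y \<in> Lset n" "w \<in> Lset n"
  shows "shuffle n (ladd n y w) = opmat_add (2*n) (shuffle n y) (shuffle n w)"
proof (rule ext, rule ext)
  fix r s
  show "shuffle n (ladd n y w) r s = opmat_add (2*n) (shuffle n y) (shuffle n w) r s"
    using div_mod_facts[of r n] div_mod_facts[of s n]
    by (simp add: shuffle_def ladd_def opmat_add_def)
qed

lemma shuffle_lscale:
  shows "shuffle n (lscale n c y) = opmat_scale (2*n) c (shuffle n y)"
proof (rule ext, rule ext)
  fix r s
  show "shuffle n (lscale n c y) r s = opmat_scale (2*n) c (shuffle n y) r s"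
    using div_mod_facts[of r n] div_mod_facts[of s n]
    by (simp add: shuffle_def lscale_def opmat_scale_def)
qed

lemma shuffle_Eh: "shuffle n (Eh n) = pq_diag n p"
proof (rule ext, rule ext)
  fix r s
  show "shuffle n (Eh n) r s = pq_diag n p r s"
  proof (cases "r < 2*n \<and> s < 2*n")
    case True
    note dr = div_mod_facts[of r n] and ds = div_mod_facts[of s n]
    have eq: "(r mod n = s mod n \<and> r div n = s div n) \<longleftrightarrow> r = s"
      by (metis div_mult_mod_eq)
    show ?thesis using True dr ds eq Pd_div[of r n]
      unfolding shuffle_def Eh_def pq_diag_Pd[of n] pq_diag_Pd[of 1] by auto
  next
    case False
    then show ?thesis unfolding shuffle_def pq_diag_Pd by auto
  qed
qed

lemma posF_ladd: "y \<in> Lset n \<Longrightarrow> w \<in> Lset n \<Longrightarrow> posF n (ladd n y w) \<xi> = posF n y \<xi> + posF n w \<xi>"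
  unfolding posF_def by (simp add: shuffle_ladd posform_add shuffle_opmats Pd_V)

lemma posF_lscale: "y \<in> Lset n \<Longrightarrow> posF n (lscale n c y) \<xi> = c * posF n y \<xi>"
  unfolding posF_def by (simp add: shuffle_lscale posform_scale shuffle_opmats Pd_V)

lemma posF_Eh: "posF n (Eh n) \<xi> = of_real (Nrm n \<xi>)"
proof -
  have "posF n (Eh n) \<xi> = (\<Sum>r<2*n. \<Sum>s<2*n. if s = r then cinner (Pd p n r (\<xi> r)) (Pd p n r (\<xi> r)) else 0)"
    unfolding posF_def shuffle_Eh posform_def
    by (intro sum.cong refl) (auto simp: pq_diag_Pd zop_def Pd_zero Pd_self)
  also have "\<dots> = (\<Sum>r<2*n. of_real ((cnorm (Pd p n r (\<xi> r)))\<^sup>2))"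
    by (intro sum.cong refl) (simp add: cnorm_sq cinner_self_real[symmetric])
  finally show ?thesis unfolding Nrm_def by simp
qed

lemma posF_zeroL: "posF n (\<lambda>i j. zero2) \<xi> = 0"
  unfolding posF_def posform_def shuffle_def by (simp add: zop_def Pd_zero)

lemma hermL_ladd:
  assumes y: "y \<in> Lset n" and w: "w \<in> Lset n" and hy: "hermL n y" and hw: "hermL n w"
  shows "hermL n (ladd n y w)"
  unfolding hermL_def
proof (intro allI impI)
  fix i j a b :: nat assume ij: "i < n" "j < n" "a < 2" "b < 2"
  have e1: "y i j a b = adj (y j i b a)" using hy ij unfolding hermL_def by blast
  have e2: "w i j a b = adj (w j i b a)" using hw ij unfolding hermL_def by blast
  have V1: "y j i b a \<in> V" "w j i b a \<in> V"
    using opmats_entry[OF LsetD[OF y ij(2) ij(1)] ij(4) ij(3)] opmats_entry[OF LsetD[OF w ij(2) ij(1)] ij(4) ij(3)]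
    by auto
  show "ladd n y w i j a b = adj (ladd n y w j i b a)"
    using ij V1 by (simp add: ladd_def opmat_add_def adj_opadd e1 e2)
qed

lemma hermL_lscale:
  assumes y: "y \<in> Lset n" and hy: "hermL n y"
  shows "hermL n (lscale n (complex_of_real r) y)"
  unfolding hermL_def
proof (intro allI impI)
  fix i j a b :: nat assume ij: "i < n" "j < n" "a < 2" "b < 2"
  have e1: "y i j a b = adj (y j i b a)" using hy ij unfolding hermL_def by blast
  have V1: "y j i b a \<in> V" using opmats_entry[OF LsetD[OF y ij(2) ij(1)] ij(4) ij(3)] .
  show "lscale n (complex_of_real r) y i j a b = adj (lscale n (complex_of_real r) y j i b a)"
    using ij V1 by (simp add: lscale_def opmat_scale_def adj_opscale e1)
qed

lemma hermL_Eh: "hermL n (Eh n)"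
  unfolding hermL_def Eh_def pq_diag_Pd by (auto simp: Pd_adj adj_zop)

lemma hermL_zero: "hermL n (\<lambda>i j. zero2)"
  unfolding hermL_def by (simp add: adj_zop)

lemma clsm_madd: "y \<in> Lset n \<Longrightarrow> w \<in> Lset n \<Longrightarrow> madd Q n (clsm n y) (clsm n w) = clsm n (ladd n y w)"
  unfolding madd_def clsm_def ladd_def by (intro ext) (auto simp: cls_add LsetD Q_zero)

lemma clsm_mscale: "y \<in> Lset n \<Longrightarrow> mscale Q n c (clsm n y) = clsm n (lscale n c y)"
  unfolding mscale_def clsm_def lscale_def by (intro ext) (auto simp: cls_scale LsetD Q_zero)

lemma unitmat_clsm: "unitmat Q n = clsm n (Eh n)"
  unfolding unitmat_def clsm_def Eh_def by (intro ext) (auto simp: Q_unit Q_zero)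

lemma mzero_clsm: "mzero Q = clsm n (\<lambda>i j. zero2)"
  unfolding mzero_def clsm_def by (intro ext) (simp add: Q_zero)

lemma opadd_comm: "opadd S T = opadd T S" by (rule ext) (simp add: opadd_def add.commute)

lemma clsm_herm:
  assumes y: "y \<in> Lset n" and h: "hermL n y"
  shows "clsm n y \<in> hermitians Q n"
  unfolding hermitians_def
proof (intro CollectI conjI)
  show "clsm n y \<in> mats Q n" unfolding mats_def clsm_def
    using y by (auto simp: Q_zero cls_in_carrier LsetD)
  have st: "opmat_star 2 (y j i) = y i j" if ij: "i < n" "j < n" for i j
  proof (rule opmats_eqI[OF opmats_star[OF LsetD[OF y ij(2) ij(1)]] LsetD[OF y ij]])
    fix a b :: nat and v assume "a < 2" "b < 2"
    then have "y i j a b = adj (y j i b a)" using h ij unfolding hermL_def by blast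
    then show "opmat_star 2 (y j i) a b v = y i j a b v"
      using \<open>a < 2\<close> \<open>b < 2\<close> by (simp add: opmat_star_apply)
  qed
  show "mstar Q n (clsm n y) = clsm n y"
    unfolding mstar_def clsm_def by (intro ext) (auto simp: cls_star LsetD[OF y] st Q_zero)
qed

lemma herm_lift:
  assumes X: "X \<in> hermitians Q n"
  obtains y where "y \<in> Lset n" "hermL n y" "X = clsm n y"
proof -
  have Xm: "X \<in> mats Q n" and Xs: "mstar Q n X = X" using X by (auto simp: hermitians_def)
  define y0 where "y0 = (\<lambda>i j. if i < n \<and> j < n then rep (X i j) else zero2)"
  have Xc: "X i j \<in> carrier Q" if "i < n" "j < n" for i j using Xm that by (simp add: mats_def)
  have y0m: "y0 i j \<in> M2" and y0c: "cls (y0 i j) = X i j" if ij: "i < n" "j < n" for i j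
  proof -
    obtain x where x: "x \<in> M2" "X i j = cls x" using Xc[OF ij] by (rule carrierE)
    show "y0 i j \<in> M2" "cls (y0 i j) = X i j" using ij x rep_cls[OF x(1)] by (auto simp: y0_def)
  qed
  have y0L: "y0 \<in> Lset n" unfolding Lset_def using y0m by (auto simp: y0_def)
  have Xout: "X i j = zero Q" if "\<not> (i < n \<and> j < n)" for i j using Xm that by (simp add: mats_def)
  have Xeq: "X = clsm n y0" unfolding clsm_def
    by (intro ext) (auto simp: y0c Xout Q_zero)
  have hs: "cls (opmat_star 2 (y0 j i)) = cls (y0 i j)" if ij: "i < n" "j < n" for i j
  proof -
    have "mstar Q n X i j = X i j" using Xs by simp
    then have "star Q (X j i) = X i j" using ij by (simp add: mstar_def)
    then show ?thesis using ij by (simp add: y0c[symmetric] cls_star y0m)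
  qed
  define y where "y = (\<lambda>i j. if i < n \<and> j < n then opmat_scale 2 (1/2) (opmat_add 2 (y0 i j) (opmat_star 2 (y0 j i))) else zero2)"
  have yL: "y \<in> Lset n" unfolding Lset_def y_def using y0m by (auto intro!: opmats_scale opmats_add opmats_star)
  have half: "opmat_scale 2 (1/2) (opmat_add 2 x x) = x" if "x \<in> M2" for x
  proof (rule opmats_eqI[OF opmats_scale[OF opmats_add[OF that that]] that])
    fix a b :: nat and v assume "a < 2" "b < 2"
    then show "opmat_scale 2 (1/2) (opmat_add 2 x x) a b v = x a b v"
      by (simp add: opmat_scale_apply opmat_add_apply half_vec)
  qed
  have yc: "cls (y i j) = cls (y0 i j)" if ij: "i < n" "j < n" for i j
  proof -
    have "cls (y i j) = scale Q (1/2) (add Q (cls (y0 i j)) (cls (opmat_star 2 (y0 j i))))"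
      using ij y0m by (simp add: y_def cls_add cls_scale opmats_star opmats_add)
    also have "\<dots> = cls (y0 i j)" using ij y0m
      by (simp add: hs cls_add cls_scale opmats_add half)
    finally show ?thesis .
  qed
  have hy: "hermL n y" unfolding hermL_def
  proof (intro allI impI)
    fix i j a b :: nat assume ij: "i < n" "j < n" "a < 2" "b < 2"
    have V1: "y0 i j a b \<in> V" "y0 j i b a \<in> V"
      using opmats_entry[OF y0m[OF ij(1) ij(2)] ij(3) ij(4)] opmats_entry[OF y0m[OF ij(2) ij(1)] ij(4) ij(3)]
      by auto
    have "adj (y j i b a) = adj (opscale (1/2) (opadd (y0 j i b a) (adj (y0 i j a b))))"
      using ij by (simp add: y_def opmat_scale_def opmat_add_def opmat_star_def)
    also have "\<dots> = opscale (1/2) (opadd (adj (y0 j i b a)) (y0 i j a b))"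
      using V1 by (simp add: adj_opscale adj_opadd opadd_V adj_V V_adj_adj)
    also have "\<dots> = y i j a b"
      using ij by (simp add: y_def opmat_scale_def opmat_add_def opmat_star_def opadd_comm)
    finally show "y i j a b = adj (y j i b a)" by simp
  qed
  have "X = clsm n y" unfolding Xeq clsm_def by (intro ext) (simp add: yc)
  then show ?thesis using that yL hy by blast
qed

lemma posform_real:
  assumes x: "x \<in> opmats N V" and h: "x = opmat_star N x"
    and P: "\<And>r. P r \<in> V" and Psa: "\<And>r a b. cinner (P r a) b = cinner a (P r b)"
  shows "Im (posform N P x \<xi>) = 0"
proof -
  have "cnj (posform N P x \<xi>) = (\<Sum>r<N. \<Sum>s<N. cinner (\<xi> r) (P r (x r s (P s (\<xi> s)))))"
    unfolding posform_def by (simp add: cinner_commute[of "\<xi> _"])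
  also have "\<dots> = (\<Sum>r<N. \<Sum>s<N. cinner (P s (x s r (P r (\<xi> r)))) (\<xi> s))"
  proof (intro sum.cong refl)
    fix r s assume rs: "r \<in> {..<N}" "s \<in> {..<N}"
    have "cinner (\<xi> r) (P r (x r s (P s (\<xi> s)))) = cinner (P r (\<xi> r)) (x r s (P s (\<xi> s)))"
      by (simp add: Psa)
    also have "\<dots> = cinner (adj (x r s) (P r (\<xi> r))) (P s (\<xi> s))"
      using rs by (simp add: V_adj2 opmats_entry[OF x])
    also have "adj (x r s) = x s r"
      using rs fun_cong[OF fun_cong[OF h, of s], of r] by (simp add: opmat_star_apply)
    also have "cinner (x s r (P r (\<xi> r))) (P s (\<xi> s)) = cinner (P s (x s r (P r (\<xi> r)))) (\<xi> s)"
      by (simp add: Psa)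
    finally show "cinner (\<xi> r) (P r (x r s (P s (\<xi> s)))) = cinner (P s (x s r (P r (\<xi> r)))) (\<xi> s)" .
  qed
  also have "\<dots> = posform N P x \<xi>" unfolding posform_def by (rule sum.swap)
  finally show ?thesis by (metis Reals_cnj_iff complex_is_Real_iff)
qed

lemma posF_real:
  assumes y: "y \<in> Lset n" and hy: "hermL n y"
  shows "Im (posF n y \<xi>) = 0"
proof -
  have h: "shuffle n y = opmat_star (2*n) (shuffle n y)" using shuffle_herm_iff[OF y] hy by simp
  show ?thesis unfolding posF_def by (rule posform_real[OF shuffle_opmats[OF y] h Pd_V Pd_sa])
qed

end

context qsetting
begin

lemma all_entries_V: "x \<in> opmats N V \<Longrightarrow> x r s \<in> V"
  by (cases "r < N \<and> s < N") (auto simp: opmats_entry opmats_out zop_V)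

lemma posform_bound:
  assumes x: "x \<in> opmats N V" and P: "\<And>r. P r \<in> V"
    and Psa: "\<And>r a b. cinner (P r a) b = cinner a (P r b)"
  shows "\<exists>K\<ge>0. \<forall>\<xi>. cmod (posform N P x \<xi>) \<le> K * (\<Sum>r<N. (cnorm (P r (\<xi> r)))\<^sup>2)"
proof -
  have "\<forall>r s. \<exists>K. \<forall>z. cnorm (x r s z) \<le> K * cnorm z"
    using all_entries_V[OF x] V_bop unfolding bop_def by blast
  then obtain Kf where Kf: "\<And>r s z. cnorm (x r s z) \<le> Kf r s * cnorm z" by metis
  define K where "K = (\<Sum>r<N. \<Sum>s<N. \<bar>Kf r s\<bar>)"
  have K0: "K \<ge> 0" unfolding K_def by (intro sum_nonneg) auto
  show ?thesis
  proof (intro exI[of _ K] conjI allI K0)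
    fix \<xi>
    define a where "a = (\<lambda>t. cnorm (P t (\<xi> t)))"
    define S where "S = (\<Sum>r<N. (a r)\<^sup>2)"
    have aS: "(a t)\<^sup>2 \<le> S" if "t < N" for t
      unfolding S_def using that by (intro member_le_sum) auto
    have trm: "cmod (cinner (P r (x r s (P s (\<xi> s)))) (\<xi> r)) \<le> \<bar>Kf r s\<bar> * S"
      if rs: "r < N" "s < N" for r s
    proof -
      have "cmod (cinner (P r (x r s (P s (\<xi> s)))) (\<xi> r)) = cmod (cinner (x r s (P s (\<xi> s))) (P r (\<xi> r)))"
        by (simp add: Psa)
      also have "\<dots> \<le> cnorm (x r s (P s (\<xi> s))) * a r" unfolding a_def by (rule cauchy_schwarz)
      also have "\<dots> \<le> (\<bar>Kf r s\<bar> * a s) * a r"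
      proof (intro mult_right_mono)
        show "cnorm (x r s (P s (\<xi> s))) \<le> \<bar>Kf r s\<bar> * a s"
          using Kf[of r s "P s (\<xi> s)"] unfolding a_def
          by (meson abs_ge_self cnorm_ge0 mult_right_mono order_trans)
      qed (simp add: a_def)
      also have "\<dots> = \<bar>Kf r s\<bar> * (a s * a r)" by simp
      also have "\<dots> \<le> \<bar>Kf r s\<bar> * S"
      proof (intro mult_left_mono)
        have "a s * a r \<le> ((a s)\<^sup>2 + (a r)\<^sup>2) / 2"
          using sum_squares_bound[of "a s" "a r"] by (simp add: field_simps power2_eq_square)
        also have "\<dots> \<le> S" using aS[OF rs(1)] aS[OF rs(2)] by simp
        finally show "a s * a r \<le> S" .
      qed simp
      finally show ?thesis .
    qed
    have "cmod (posform N P x \<xi>) \<le> (\<Sum>r<N. \<Sum>s<N. cmod (cinner (P r (x r s (P s (\<xi> s)))) (\<xi> r)))"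
      unfolding posform_def by (rule order_trans[OF norm_sum sum_mono]) (rule norm_sum)
    also have "\<dots> \<le> (\<Sum>r<N. \<Sum>s<N. \<bar>Kf r s\<bar> * S)"
      by (intro sum_mono trm) auto
    also have "\<dots> = K * S" unfolding K_def by (simp add: sum_distrib_right)
    finally show "cmod (posform N P x \<xi>) \<le> K * (\<Sum>r<N. (cnorm (P r (\<xi> r)))\<^sup>2)"
      unfolding S_def a_def .
  qed
qed

lemma Q_cone_herm: "cone Q n \<subseteq> hermitians Q n"
proof
  fix X assume "X \<in> cone Q n"
  then obtain y where "y \<in> Lset n" "X = clsm n y" "hermL n y" by (rule cone_memE)
  then show "X \<in> hermitians Q n" using clsm_herm by simp
qed

lemma Q_cone_add: "X \<in> cone Q n \<Longrightarrow> Y \<in> cone Q n \<Longrightarrow> madd Q n X Y \<in> cone Q n"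
proof -
  assume "X \<in> cone Q n" "Y \<in> cone Q n"
  then obtain y w where y: "y \<in> Lset n" "X = clsm n y" "hermL n y"
    "\<And>\<xi>. Im (posF n y \<xi>) = 0" "\<And>\<xi>. 0 \<le> Re (posF n y \<xi>)"
    and w: "w \<in> Lset n" "Y = clsm n w" "hermL n w"
    "\<And>\<xi>. Im (posF n w \<xi>) = 0" "\<And>\<xi>. 0 \<le> Re (posF n w \<xi>)"
    by (metis cone_memE)
  have "madd Q n X Y = clsm n (ladd n y w)" using y w clsm_madd by simp
  also have "\<dots> \<in> cone Q n"
    by (rule cone_memI) (use y w in \<open>auto simp: ladd_L hermL_ladd posF_ladd add_nonneg_nonneg\<close>)
  finally show ?thesis .
qed

lemma Q_cone_scale: "X \<in> cone Q n \<Longrightarrow> r \<ge> 0 \<Longrightarrow> mscale Q n (complex_of_real r) X \<in> cone Q n"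
proof -
  assume "X \<in> cone Q n" "r \<ge> 0"
  then obtain y where y: "y \<in> Lset n" "X = clsm n y" "hermL n y"
    "\<And>\<xi>. Im (posF n y \<xi>) = 0" "\<And>\<xi>. 0 \<le> Re (posF n y \<xi>)"
    by (metis cone_memE)
  have "mscale Q n (complex_of_real r) X = clsm n (lscale n (complex_of_real r) y)" using y clsm_mscale by simp
  also have "\<dots> \<in> cone Q n"
    by (rule cone_memI) (use y \<open>r \<ge> 0\<close> in \<open>auto simp: lscale_L hermL_lscale posF_lscale\<close>)
  finally show ?thesis .
qed

lemma hermL_lscale_m1: "y \<in> Lset n \<Longrightarrow> hermL n y \<Longrightarrow> hermL n (lscale n (-1) y)"
  using hermL_lscale[of y n "-1"] by simp

lemma Q_cone_proper: "cone Q n \<inter> {X. mscale Q n (-1) X \<in> cone Q n} = {mzero Q}"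
proof
  show "cone Q n \<inter> {X. mscale Q n (-1) X \<in> cone Q n} \<subseteq> {mzero Q}"
  proof
    fix X assume "X \<in> cone Q n \<inter> {X. mscale Q n (-1) X \<in> cone Q n}"
    then have X1: "X \<in> cone Q n" and X2: "mscale Q n (-1) X \<in> cone Q n" by auto
    obtain y where y: "y \<in> Lset n" "X = clsm n y" "hermL n y"
      "\<And>\<xi>. Im (posF n y \<xi>) = 0" "\<And>\<xi>. 0 \<le> Re (posF n y \<xi>)"
      using X1 by (metis cone_memE)
    have "clsm n (lscale n (-1) y) \<in> cone Q n" using X2 y clsm_mscale by simp
    then have "0 \<le> Re (posF n (lscale n (-1) y) \<xi>)" for \<xi>
      using cone_posF[OF lscale_L[OF y(1)]] by blast
    then have neg: "Re (posF n y \<xi>) \<le> 0" for \<xi> using posF_lscale[OF y(1), of "-1"] by simp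
    have z: "posF n y \<xi> = 0" for \<xi>
      using neg[of \<xi>] y(4)[of \<xi>] y(5)[of \<xi>] by (simp add: complex_eq_iff)
    have zero: "Pd p n r (shuffle n y r s (Pd p n s v)) = 0" if "r < 2*n" "s < 2*n" for r s v
      using posform_zero_entries[OF shuffle_opmats[OF y(1)] Pd_V z[unfolded posF_def] that] .
    have clsz: "cls (y i j) = cls zero2" if ij: "i < n" "j < n" for i j
      unfolding cls_comp[OF LsetD[OF y(1) ij] opmats_zero]
    proof (intro allI impI)
      fix a b :: nat and v assume ab: "a < 2" "b < 2"
      have "Pd p n (a*n+i) (shuffle n y (a*n+i) (b*n+j) (Pd p n (b*n+j) v)) = 0"
        using zero am_less ij ab by blast
      then have "Pd p 1 a (y i j a b (Pd p 1 b v)) = 0"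
        using ij ab by (simp add: shuffle_apply Pd_div[OF am_less[OF ij(1) ab(1)]]
            Pd_div[OF am_less[OF ij(2) ab(2)]])
      then show "Pd p 1 a (y i j a b (Pd p 1 b v)) = Pd p 1 a (zop (Pd p 1 b v))"
        by (simp add: zop_def Pd_zero)
    qed
    have "X = mzero Q" unfolding y(2) mzero_clsm[of n] clsm_def by (intro ext) (simp add: clsz)
    then show "X \<in> {mzero Q}" by simp
  qed
next
  have m0: "mzero Q \<in> cone Q n"
    unfolding mzero_clsm[of n]
    by (rule cone_memI) (auto simp: zeroL hermL_zero posF_zeroL)
  have "mscale Q n (-1) (mzero Q) = clsm n (lscale n (-1) (\<lambda>i j. zero2))"
    unfolding mzero_clsm[of n] using clsm_mscale[OF zeroL] by simp
  also have "\<dots> \<in> cone Q n"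
    by (rule cone_memI) (auto simp: zeroL hermL_zero posF_zeroL lscale_L hermL_lscale_m1 posF_lscale)
  finally show "{mzero Q} \<subseteq> cone Q n \<inter> {X. mscale Q n (-1) X \<in> cone Q n}" using m0 by simp
qed

lemma Q_unit_carrier: "unit Q \<in> carrier Q"
  unfolding Q_unit using pq1_M2 by (rule cls_in_carrier)

lemma Q_unit_star: "star Q (unit Q) = unit Q"
proof -
  have "opmat_star 2 (pq_diag 1 p) = pq_diag 1 p"
    unfolding pq_diag_Pd by (intro ext) (auto simp: opmat_star_def Pd_adj adj_zop)
  then show ?thesis unfolding Q_unit cls_star[OF pq1_M2] by (simp only:)
qed

lemma unit_shift:
  assumes y: "y \<in> Lset n"
  shows "madd Q n (mscale Q n (complex_of_real r) (unitmat Q n)) (clsm n y)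
       = clsm n (ladd n (lscale n (complex_of_real r) (Eh n)) y)"
  unfolding unitmat_clsm clsm_mscale[OF Eh_L] clsm_madd[OF lscale_L[OF Eh_L] y] ..

lemma posF_shift:
  assumes y: "y \<in> Lset n"
  shows "posF n (ladd n (lscale n (complex_of_real r) (Eh n)) y) \<xi>
       = complex_of_real (r * Nrm n \<xi>) + posF n y \<xi>"
  by (simp add: posF_ladd[OF lscale_L[OF Eh_L] y] posF_lscale[OF Eh_L] posF_Eh)

lemma shift_herm: "y \<in> Lset n \<Longrightarrow> hermL n y \<Longrightarrow> hermL n (ladd n (lscale n (complex_of_real r) (Eh n)) y)"
  by (intro hermL_ladd lscale_L Eh_L hermL_lscale hermL_Eh)

lemma shift_L: "y \<in> Lset n \<Longrightarrow> ladd n (lscale n (complex_of_real r) (Eh n)) y \<in> Lset n"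
  by (intro ladd_L lscale_L Eh_L)

lemma Q_arch1:
  assumes X: "X \<in> hermitians Q n"
  shows "\<exists>r::real. r > 0 \<and> madd Q n (mscale Q n (complex_of_real r) (unitmat Q n)) X \<in> cone Q n"
proof -
  obtain y where y: "y \<in> Lset n" "hermL n y" "X = clsm n y" using X by (rule herm_lift)
  obtain K where K: "K \<ge> 0" "\<And>\<xi>. cmod (posF n y \<xi>) \<le> K * Nrm n \<xi>"
    using posform_bound[where P = "Pd p n", OF shuffle_opmats[OF y(1)] Pd_V Pd_sa] unfolding posF_def[symmetric] Nrm_def[symmetric]
    by blast
  define r where "r = K + 1"
  have r: "r > 0" using K by (simp add: r_def)
  have "madd Q n (mscale Q n (complex_of_real r) (unitmat Q n)) X
      = clsm n (ladd n (lscale n (complex_of_real r) (Eh n)) y)"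
    unfolding y(3) by (rule unit_shift[OF y(1)])
  also have "\<dots> \<in> cone Q n"
  proof (rule cone_memI[OF shift_L[OF y(1)] shift_herm[OF y(1,2)]])
    fix \<xi>
    show "Im (posF n (ladd n (lscale n (complex_of_real r) (Eh n)) y) \<xi>) = 0"
      using posF_real[OF y(1,2)] by (simp add: posF_shift[OF y(1)])
    have "- Re (posF n y \<xi>) \<le> K * Nrm n \<xi>"
      using K(2)[of \<xi>] abs_Re_le_cmod[of "posF n y \<xi>"] by linarith
    moreover have "0 \<le> Nrm n \<xi>" by (rule Nrm_ge0)
    moreover have "Re (posF n (ladd n (lscale n (complex_of_real r) (Eh n)) y) \<xi>) = r * Nrm n \<xi> + Re (posF n y \<xi>)"
      by (simp add: posF_shift[OF y(1)])
    moreover have "r * Nrm n \<xi> = K * Nrm n \<xi> + Nrm n \<xi>" by (simp add: r_def algebra_simps)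
    ultimately show "0 \<le> Re (posF n (ladd n (lscale n (complex_of_real r) (Eh n)) y) \<xi>)"
      by linarith
  qed
  finally show ?thesis using r by blast
qed

lemma Q_arch2:
  assumes X: "X \<in> hermitians Q n"
    and H: "\<forall>r::real. r > 0 \<longrightarrow> madd Q n (mscale Q n (complex_of_real r) (unitmat Q n)) X \<in> cone Q n"
  shows "X \<in> cone Q n"
proof -
  obtain y where y: "y \<in> Lset n" "hermL n y" "X = clsm n y" using X by (rule herm_lift)
  have pos: "0 \<le> r * Nrm n \<xi> + Re (posF n y \<xi>)" if r: "r > 0" for r \<xi>
  proof -
    have "clsm n (ladd n (lscale n (complex_of_real r) (Eh n)) y) \<in> cone Q n"
      using H r unfolding y(3) unit_shift[OF y(1)] by blast
    then have "0 \<le> Re (posF n (ladd n (lscale n (complex_of_real r) (Eh n)) y) \<xi>)"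
      using cone_posF[OF shift_L[OF y(1)]] by blast
    then show ?thesis by (simp add: posF_shift[OF y(1)])
  qed
  show ?thesis unfolding y(3)
  proof (rule cone_memI[OF y(1) y(2)])
    fix \<xi>
    show "Im (posF n y \<xi>) = 0" by (rule posF_real[OF y(1,2)])
    show "0 \<le> Re (posF n y \<xi>)"
    proof (rule ccontr)
      assume "\<not> 0 \<le> Re (posF n y \<xi>)"
      then have neg: "Re (posF n y \<xi>) < 0" by simp
      define N where "N = Nrm n \<xi>"
      have N0: "N \<ge> 0" unfolding N_def by (rule Nrm_ge0)
      define r where "r = (- Re (posF n y \<xi>)) / (2 * (N + 1))"
      have r: "r > 0" unfolding r_def using neg N0 by (intro divide_pos_pos) auto
      have "r * N \<le> r * (N + 1)" using r by simp
      also have "\<dots> = - Re (posF n y \<xi>) / 2"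
      proof -
        have nz: "2 * N + 2 \<noteq> 0" "N + 1 \<noteq> 0" using N0 by auto
        show ?thesis unfolding r_def using nz by (simp add: field_simps)
      qed
      finally have "r * N + Re (posF n y \<xi>) < 0" using neg by simp
      then show False using pos[OF r, of \<xi>] unfolding N_def by simp
    qed
  qed
qed

end

lemma swap4:
  "(\<Sum>k\<in>A. \<Sum>l\<in>B. \<Sum>i\<in>C. \<Sum>j\<in>D. F k l i j) = (\<Sum>i\<in>C. \<Sum>j\<in>D. \<Sum>k\<in>A. \<Sum>l\<in>B. F k l i j)"
proof -
  have "(\<Sum>k\<in>A. \<Sum>l\<in>B. \<Sum>i\<in>C. \<Sum>j\<in>D. F k l i j) = (\<Sum>k\<in>A. \<Sum>i\<in>C. \<Sum>l\<in>B. \<Sum>j\<in>D. F k l i j)"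
    by (rule sum.cong[OF refl], rule sum.swap)
  also have "\<dots> = (\<Sum>i\<in>C. \<Sum>k\<in>A. \<Sum>l\<in>B. \<Sum>j\<in>D. F k l i j)" by (rule sum.swap)
  also have "\<dots> = (\<Sum>i\<in>C. \<Sum>k\<in>A. \<Sum>j\<in>D. \<Sum>l\<in>B. F k l i j)"
    by (rule sum.cong[OF refl], rule sum.cong[OF refl], rule sum.swap)
  also have "\<dots> = (\<Sum>i\<in>C. \<Sum>j\<in>D. \<Sum>k\<in>A. \<Sum>l\<in>B. F k l i j)"
    by (rule sum.cong[OF refl], rule sum.swap)
  finally show ?thesis .
qed

context qsetting
begin

definition msum :: "nat \<Rightarrow> (nat \<Rightarrow> 'h opmat) \<Rightarrow> 'h opmat" where
  "msum n f = (\<lambda>a b. if a < 2 \<and> b < 2 then (\<lambda>v. \<Sum>i<n. f i a b v) else zop)"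

definition msuml :: "nat list \<Rightarrow> (nat \<Rightarrow> 'h opmat) \<Rightarrow> 'h opmat" where
  "msuml xs f = (\<lambda>a b. if a < 2 \<and> b < 2 then (\<lambda>v. sum_list (map (\<lambda>i. f i a b v) xs)) else zop)"

lemma msum_apply: "a < 2 \<Longrightarrow> b < 2 \<Longrightarrow> msum n f a b v = (\<Sum>i<n. f i a b v)"
  by (simp add: msum_def)

lemma msum_M2:
  assumes "\<And>i. i < n \<Longrightarrow> f i \<in> M2"
  shows "msum n f \<in> M2"
proof -
  have "(\<lambda>v. \<Sum>i<n. f i a b v) \<in> V" if "a < 2" "b < 2" for a b
    using assms that by (intro sum_V) (auto intro: opmats_entry)
  then show ?thesis unfolding opmats_def msum_def by auto
qed

lemma wsum_list:
  assumes "\<And>i. i \<in> set xs \<Longrightarrow> f i \<in> M2"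
  shows "foldr (add Q) (map (\<lambda>i. cls (f i)) xs) (cls zero2) = cls (msuml xs f) \<and> msuml xs f \<in> M2"
  using assms
proof (induction xs)
  case Nil
  have "msuml [] f = zero2" by (intro ext) (simp add: msuml_def zop_def)
  then show ?case using opmats_zero by simp
next
  case (Cons x xs)
  then have IH: "foldr (add Q) (map (\<lambda>i. cls (f i)) xs) (cls zero2) = cls (msuml xs f)" "msuml xs f \<in> M2"
    and fx: "f x \<in> M2" by auto
  have e: "opmat_add 2 (f x) (msuml xs f) = msuml (x # xs) f"
    by (intro ext) (simp add: opmat_add_def opadd_def msuml_def)
  show ?case using IH fx e opmats_add[OF fx IH(2)] by (simp add: cls_add)
qed

lemma wsum_cls:
  assumes "\<And>i. i < n \<Longrightarrow> f i \<in> M2"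
  shows "wsum Q (\<lambda>i. cls (f i)) n = cls (msum n f)"
proof -
  have "msuml [0..<n] f = msum n f"
    by (intro ext) (simp add: msuml_def msum_def sum_set_upt_conv_sum_list_nat[symmetric] atLeast0LessThan)
  then show ?thesis unfolding wsum_def Q_zero using wsum_list[of "[0..<n]" f] assms by simp
qed

lemma wsum_cong: "(\<And>i. i < n \<Longrightarrow> f i = g i) \<Longrightarrow> wsum S f n = wsum S g n"
  unfolding wsum_def by (metis (mono_tags, lifting) atLeastLessThan_iff map_eq_conv set_upt)

lemma posF_block:
  assumes y: "y \<in> Lset n"
  shows "posF n y \<xi> = (\<Sum>a<2. \<Sum>i<n. \<Sum>b<2. \<Sum>j<n.
           cinner (Pd p 1 a (y i j a b (Pd p 1 b (\<xi> (b*n+j))))) (\<xi> (a*n+i)))"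
  unfolding posF_def posform_def
  apply (simp only: sum_2n[of _ n])
proof (intro sum.cong refl)
  fix a i b j :: nat assume "a \<in> {..<2}" "i \<in> {..<n}" "b \<in> {..<2}" "j \<in> {..<n}"
  then have ab: "a < 2" "i < n" "b < 2" "j < n" by auto
  show "cinner (Pd p n (a*n+i) (shuffle n y (a*n+i) (b*n+j) (Pd p n (b*n+j) (\<xi> (b*n+j))))) (\<xi> (a*n+i))
      = cinner (Pd p 1 a (y i j a b (Pd p 1 b (\<xi> (b*n+j))))) (\<xi> (a*n+i))"
    unfolding Pd_div[OF am_less[OF ab(2) ab(1)]] Pd_div[OF am_less[OF ab(4) ab(3)]]
      shuffle_apply[OF ab(2) ab(4) ab(1) ab(3)] am_div[OF ab(2)] am_div[OF ab(4)] ..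
qed

lemma Q_congr:
  assumes X: "X \<in> cone Q n"
  shows "congr Q n m \<alpha> X \<in> cone Q m"
proof -
  obtain y where y: "y \<in> Lset n" "X = clsm n y" "hermL n y"
    "\<And>\<xi>. Im (posF n y \<xi>) = 0" "\<And>\<xi>. 0 \<le> Re (posF n y \<xi>)"
    using X by (metis cone_memE)
  define co where "co = (\<lambda>i j k l. cnj (\<alpha> i k) * \<alpha> j l)"
  define z where "z = (\<lambda>k l. if k < m \<and> l < m then msum n (\<lambda>i. msum n (\<lambda>j. opmat_scale 2 (co i j k l) (y i j))) else zero2)"
  have inner_M2: "msum n (\<lambda>j. opmat_scale 2 (co i j k l) (y i j)) \<in> M2" if "i < n" for i k l
    using that by (intro msum_M2 opmats_scale LsetD[OF y(1)])
  have zkl: "msum n (\<lambda>i. msum n (\<lambda>j. opmat_scale 2 (co i j k l) (y i j))) \<in> M2" for k l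
    by (rule msum_M2) (rule inner_M2)
  have zL: "z \<in> Lset m"
    unfolding Lset_def z_def using zkl by auto
  have zapp: "z k l a b v = (\<Sum>i<n. \<Sum>j<n. cscale (co i j k l) (y i j a b v))"
    if "k < m" "l < m" "a < 2" "b < 2" for k l a b v
    using that by (simp add: z_def msum_apply opmat_scale_apply)
  have eq: "congr Q n m \<alpha> X = clsm m z"
  proof (intro ext)
    fix k l
    show "congr Q n m \<alpha> X k l = clsm m z k l"
    proof (cases "k < m \<and> l < m")
      case True
      have "wsum Q (\<lambda>i. wsum Q (\<lambda>j. scale Q (cnj (\<alpha> i k) * \<alpha> j l) (X i j)) n) n
          = wsum Q (\<lambda>i. wsum Q (\<lambda>j. cls (opmat_scale 2 (co i j k l) (y i j))) n) n"
        by (intro wsum_cong) (simp add: y(2) clsm_def cls_scale LsetD[OF y(1)] co_def)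
      also have "\<dots> = wsum Q (\<lambda>i. cls (msum n (\<lambda>j. opmat_scale 2 (co i j k l) (y i j)))) n"
        by (intro wsum_cong wsum_cls opmats_scale LsetD[OF y(1)])
      also have "\<dots> = cls (msum n (\<lambda>i. msum n (\<lambda>j. opmat_scale 2 (co i j k l) (y i j))))"
        by (intro wsum_cls inner_M2)
      finally show ?thesis using True by (simp add: congr_def clsm_def z_def)
    next
      case False
      then show ?thesis by (auto simp: congr_def clsm_def Q_zero)
    qed
  qed
  have hz: "hermL m z" unfolding hermL_def
  proof (intro allI impI)
    fix k l a b :: nat assume kl: "k < m" "l < m" "a < 2" "b < 2"
    have herm_y: "adj (y i j b a) = y j i a b" if "i < n" "j < n" for i j
      using y(3) that kl(3,4) unfolding hermL_def by (metis)
    have Vy: "y i j b a \<in> V" if "i < n" "j < n" for i j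
      using opmats_entry[OF LsetD[OF y(1) that] kl(4) kl(3)] .
    have "adj (z l k b a) = z k l a b"
    proof (rule adj_unique, intro allI)
      fix u w
      have "cinner (z l k b a u) w = (\<Sum>i<n. \<Sum>j<n. co i j l k * cinner u (y j i a b w))"
        using kl by (simp add: zapp cinner_sum_left cinner_cscale_left V_adj1[OF Vy] herm_y)
      also have "\<dots> = (\<Sum>j<n. \<Sum>i<n. co i j l k * cinner u (y j i a b w))" by (rule sum.swap)
      also have "\<dots> = (\<Sum>j<n. \<Sum>i<n. cnj (co j i k l) * cinner u (y j i a b w))"
        by (simp add: co_def mult.commute)
      also have "\<dots> = cinner u (z k l a b w)"
        using kl by (simp add: zapp cinner_sum_right cinner_cscale_right)
      finally show "cinner (z l k b a u) w = cinner u (z k l a b w)" .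
    qed
    then show "z k l a b = adj (z l k b a)" by simp
  qed
  define \<eta> where "\<eta> = (\<lambda>(\<xi>::nat \<Rightarrow> 'h) t. \<Sum>l<m. cscale (\<alpha> (t mod n) l) (\<xi> ((t div n) * m + l)))"
  have pz: "posF m z \<xi> = posF n y (\<eta> \<xi>)" for \<xi>
  proof -
    define T where "T = (\<lambda>a b i j k l. cinner (Pd p 1 a (y i j a b (Pd p 1 b (\<xi> (b*m+l))))) (\<xi> (a*m+k)))"
    have L1: "posF m z \<xi> = (\<Sum>a<2. \<Sum>k<m. \<Sum>b<2. \<Sum>l<m. \<Sum>i<n. \<Sum>j<n. co i j k l * T a b i j k l)"
      unfolding posF_block[OF zL]
      by (intro sum.cong refl)
        (simp add: zapp V_sum[OF Pd_V] V_scale[OF Pd_V] cinner_sum_left cinner_cscale_left T_def)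
    have etab: "\<eta> \<xi> (b*n+j) = (\<Sum>l<m. cscale (\<alpha> j l) (\<xi> (b*m+l)))" if "j < n" for b j
      using that by (simp add: \<eta>_def)
    have R1: "posF n y (\<eta> \<xi>) = (\<Sum>a<2. \<Sum>i<n. \<Sum>b<2. \<Sum>j<n. \<Sum>k<m. \<Sum>l<m. co i j k l * T a b i j k l)"
      unfolding posF_block[OF y(1)]
    proof (intro sum.cong refl)
      fix a i b j :: nat assume "a \<in> {..<2}" "i \<in> {..<n}" "b \<in> {..<2}" "j \<in> {..<n}"
      then have ab: "a < 2" "i < n" "b < 2" "j < n" by auto
      have Vy: "y i j a b \<in> V" using opmats_entry[OF LsetD[OF y(1) ab(2) ab(4)] ab(1) ab(3)] .
      show "cinner (Pd p 1 a (y i j a b (Pd p 1 b (\<eta> \<xi> (b*n+j))))) (\<eta> \<xi> (a*n+i))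
          = (\<Sum>k<m. \<Sum>l<m. co i j k l * T a b i j k l)"
        using ab by (simp add: etab V_sum[OF Pd_V] V_scale[OF Pd_V] V_sum[OF Vy] V_scale[OF Vy]
            cinner_sum_left cinner_sum_right cinner_cscale_left cinner_cscale_right T_def co_def
            sum_distrib_left mult_ac)
    qed
    have "posF m z \<xi> = (\<Sum>a<2. \<Sum>b<2. \<Sum>k<m. \<Sum>l<m. \<Sum>i<n. \<Sum>j<n. co i j k l * T a b i j k l)"
      unfolding L1 by (rule sum.cong[OF refl], rule sum.swap)
    also have "\<dots> = (\<Sum>a<2. \<Sum>b<2. \<Sum>i<n. \<Sum>j<n. \<Sum>k<m. \<Sum>l<m. co i j k l * T a b i j k l)"
      by (rule sum.cong[OF refl], rule sum.cong[OF refl], rule swap4)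
    also have "\<dots> = (\<Sum>a<2. \<Sum>i<n. \<Sum>b<2. \<Sum>j<n. \<Sum>k<m. \<Sum>l<m. co i j k l * T a b i j k l)"
      by (rule sum.cong[OF refl], rule sum.swap)
    also have "\<dots> = posF n y (\<eta> \<xi>)" unfolding R1 ..
    finally show ?thesis .
  qed
  show ?thesis unfolding eq
    by (rule cone_memI[OF zL hz]) (simp_all add: pz y(4) y(5))
qed

end

theorem theorem3p13:
  fixes V :: "('h::chilbert) op set" and p :: "'h op"
  assumes "concrete_opsys V" and "p \<in> V" and "is_projection p"
  shows "operator_system (quotient_osys V p)"
proof -
  interpret qsetting V p using assms by unfold_locales
  show ?thesis
    unfolding operator_system_def matrix_ordered_def archimedean_matrix_order_unit_def
  proof (intro conjI allI impI ballI)
    show "star_vector_space Q" by (rule Q_svs)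
    show "cone Q n \<subseteq> hermitians Q n" for n by (rule Q_cone_herm)
    show "madd Q n X Y \<in> cone Q n" if "X \<in> cone Q n" "Y \<in> cone Q n" for n X Y
      using that by (rule Q_cone_add)
    show "mscale Q n (complex_of_real r) X \<in> cone Q n" if "X \<in> cone Q n" "0 \<le> r" for n r X
      using that by (rule Q_cone_scale)
    show "cone Q n \<inter> {X. mscale Q n (-1) X \<in> cone Q n} = {mzero Q}" for n by (rule Q_cone_proper)
    show "congr Q n m \<alpha> X \<in> cone Q m" if "X \<in> cone Q n" for n m \<alpha> X
      using that by (rule Q_congr)
    show "unit Q \<in> carrier Q" by (rule Q_unit_carrier)
    show "star Q (unit Q) = unit Q" by (rule Q_unit_star)
    show "\<exists>r. 0 < r \<and> madd Q n (mscale Q n (complex_of_real r) (unitmat Q n)) X \<in> cone Q n"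
      if "X \<in> hermitians Q n" for n X using that by (rule Q_arch1)
    show "X \<in> cone Q n"
      if "X \<in> hermitians Q n" "\<forall>r. 0 < r \<longrightarrow> madd Q n (mscale Q n (complex_of_real r) (unitmat Q n)) X \<in> cone Q n"
      for n X using that by (rule Q_arch2)
  qed
qed


end
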